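(* Let $L_0=\partial_x^r+\sum_{i=0}^{r-2}f_i\partial_x^i$ with $f_i$ formal functions of $x$. For every integer $a\ge1$, $$ \Big(\widehat{L_0^{\frac ar}}\Big)_1=\frac{a(a-r)}{2r^2}\,\widehat L_0^{\frac ar-2}\,\partial_z\widehat L_0\,\partial_x\widehat L_0 \;=\;\frac{a}{2r}\,\partial_z\big(\widehat L_0^{\frac ar-1}\big)\,\partial_x\widehat L_0 . $$
   Context: Fix $r\ge2$. Pseudo-differential operators in $\partial_x$ multiply via $\partial_x^k\circ f=\sum_{l\ge0}\binom kl f^{(l)}\partial_x^{k-l}$; $L_0^{a/r}$ denotes the $a$-th power of the unique $r$-th root $L_0^{1/r}=\partial_x+\sum_{n\ge0}\tilde a_n\partial_x^{-n}$. The symbol of an operator $\sum a_n\partial_x^n$ is $\sum a_nz^n$. $\widehat L_0=z^r+\sum f_iz^i$, and $\widehat L_0^{q}$ denotes the power of this Laurent series, $z^{rq}(1+z^{-r}\sum f_iz^i)^q$. The coefficients of the symbol $\widehat{L_0^{a/r}}=\sum_{i\le a}P_iz^i$ are universal polynomials $P_i$ in the derivatives $f_j^{(k)}=\partial_x^kf_j$; assigning $f_j^{(k)}$ differential degree $k$, $\big(\widehat{L_0^{a/r}}\big)_1$ denotes $\sum_i P_{i,1}z^i$, where $P_{i,1}$ is the part of $P_i$ of differential degree exactly $1$. *)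

theory Defs
  imports Complex_Main "HOL-Library.Poly_Mapping"
begin

text \<open>Variables (j,k) stand for f_j^{(k)}, the k-th x-derivative of f_j.\<close>

type_synonym monom = "(nat \<times> nat, nat) poly_mapping"
type_synonym dpoly = "(monom, rat) poly_mapping"

definition rconst :: "rat \<Rightarrow> dpoly" where
  "rconst c = Poly_Mapping.single 0 c"

definition fvar :: "nat \<Rightarrow> nat \<Rightarrow> dpoly" where
  "fvar j k = Poly_Mapping.single (Poly_Mapping.single (j, k) 1) 1"

text \<open>The total derivation d/dx: f_j^{(k)} maps to f_j^{(k+1)}, extended by Leibniz.\<close>
definition dx :: "dpoly \<Rightarrow> dpoly" where
  "dx p = (\<Sum>m\<in>Poly_Mapping.keys p. \<Sum>v\<in>Poly_Mapping.keys (m :: monom).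
     Poly_Mapping.single
       (m - Poly_Mapping.single v 1 + Poly_Mapping.single (fst v, Suc (snd v)) 1)
       (Poly_Mapping.lookup p m * of_nat (Poly_Mapping.lookup m v)))"

definition ddeg :: "monom \<Rightarrow> nat" where
  "ddeg m = (\<Sum>v\<in>Poly_Mapping.keys m. Poly_Mapping.lookup m v * snd v)"

definition deg1 :: "dpoly \<Rightarrow> dpoly" where
  "deg1 p = (\<Sum>m\<in>{m\<in>Poly_Mapping.keys p. ddeg m = 1}. Poly_Mapping.single m (Poly_Mapping.lookup p m))"

text \<open>A function A :: int \<Rightarrow> dpoly represents both sum_n A n \<partial>_x^n and its
  symbol sum_n A n z^n; all objects considered have coefficients vanishing
  above some degree.\<close>

definition ub :: "(int \<Rightarrow> dpoly) \<Rightarrow> int" where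
  "ub A = (SOME N. \<forall>n>N. A n = 0)"

definition lmult :: "(int \<Rightarrow> dpoly) \<Rightarrow> (int \<Rightarrow> dpoly) \<Rightarrow> int \<Rightarrow> dpoly" where
  "lmult A B n = (\<Sum>k\<in>{n - ub B..ub A}. A k * B (n - k))"

definition lone :: "int \<Rightarrow> dpoly" where
  "lone n = (if n = 0 then 1 else 0)"

fun lpow :: "(int \<Rightarrow> dpoly) \<Rightarrow> nat \<Rightarrow> int \<Rightarrow> dpoly" where
  "lpow A 0 = lone"
| "lpow A (Suc k) = lmult (lpow A k) A"

definition smul :: "rat \<Rightarrow> (int \<Rightarrow> dpoly) \<Rightarrow> int \<Rightarrow> dpoly" where
  "smul c A n = rconst c * A n"

definition dz :: "(int \<Rightarrow> dpoly) \<Rightarrow> int \<Rightarrow> dpoly" where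
  "dz A n = of_int (n + 1) * A (n + 1)"

definition dxs :: "(int \<Rightarrow> dpoly) \<Rightarrow> int \<Rightarrow> dpoly" where
  "dxs A n = dx (A n)"

text \<open>Composition of pseudo-differential operators:
  (a \<partial>^k)(b \<partial>^l) = sum_{m\<ge>0} binom(k,m) a b^{(m)} \<partial>^{k+l-m}.\<close>
definition pdo_mult :: "(int \<Rightarrow> dpoly) \<Rightarrow> (int \<Rightarrow> dpoly) \<Rightarrow> int \<Rightarrow> dpoly" where
  "pdo_mult P Q n = (\<Sum>k\<in>{n - ub Q..ub P}. \<Sum>l\<in>{n - k..ub Q}.
      rconst ((of_int k :: rat) gchoose (nat (k + l - n))) * P k
        * (dx ^^ nat (k + l - n)) (Q l))"

fun pdo_pow :: "(int \<Rightarrow> dpoly) \<Rightarrow> nat \<Rightarrow> int \<Rightarrow> dpoly" where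
  "pdo_pow P 0 = lone"
| "pdo_pow P (Suc k) = pdo_mult (pdo_pow P k) P"

definition pdo_root :: "nat \<Rightarrow> (int \<Rightarrow> dpoly) \<Rightarrow> int \<Rightarrow> dpoly" where
  "pdo_root r L = (THE Q. Q 1 = 1 \<and> (\<forall>n>1. Q n = 0) \<and> pdo_pow Q r = L)"

definition L0 :: "nat \<Rightarrow> int \<Rightarrow> dpoly" where
  "L0 r n = (if n = int r then 1
             else if 0 \<le> n \<and> n \<le> int r - 2 then fvar (nat n) 0 else 0)"

text \<open>For a series L = z^r (1 + u) with u of degree \<le> -1 and q rational with r q
  an integer: L^q = z^{rq} sum_k binom(q,k) u^k.\<close>
definition lau_rpow :: "nat \<Rightarrow> rat \<Rightarrow> (int \<Rightarrow> dpoly) \<Rightarrow> int \<Rightarrow> dpoly" where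
  "lau_rpow r q L n =
     (let u = (\<lambda>m. L (m + int r) - lone m);
          e = \<lfloor>q * of_nat r\<rfloor>;
          t = n - e
      in if t > 0 then 0
         else (\<Sum>k\<in>{0..nat (- t)}. rconst (q gchoose k) * lpow u k t))"

end

theory Submission
  imports Defs "HOL-Library.Product_Lexorder" "HOL-Computational_Algebra.Formal_Laurent_Series"
begin

abbreviation SG where "SG \<equiv> Poly_Mapping.single"
abbreviation LK where "LK \<equiv> Poly_Mapping.lookup"
abbreviation KS where "KS \<equiv> Poly_Mapping.keys"

lemma pm_expand: "(p::('a \<Rightarrow>\<^sub>0 'b::comm_monoid_add)) = (\<Sum>m\<in>KS p. SG m (LK p m))"
proof (rule poly_mapping_eqI)
  fix k
  have "LK (\<Sum>m\<in>KS p. SG m (LK p m)) k = (\<Sum>m\<in>KS p. (LK p m when m = k))"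
    by (simp add: lookup_sum lookup_single)
  also have "\<dots> = LK p k"
  proof (cases "k \<in> KS p")
    case True
    then show ?thesis by (simp add: when_def sum.delta)
  next
    case False
    then have "\<forall>m\<in>KS p. (LK p m when m = k) = 0" by (auto simp: when_def)
    then show ?thesis using False by (simp add: in_keys_iff)
  qed
  finally show "LK p k = LK (\<Sum>m\<in>KS p. SG m (LK p m)) k" by simp
qed

lemma pm_expand_gen: assumes "finite K" "KS p \<subseteq> K"
  shows "(p::('a \<Rightarrow>\<^sub>0 'b::comm_monoid_add)) = (\<Sum>m\<in>K. SG m (LK p m))"
proof -
  have "(\<Sum>m\<in>K. SG m (LK p m)) = (\<Sum>m\<in>KS p. SG m (LK p m))"
    by (rule sum.mono_neutral_right[OF assms(1,2)]) (auto simp: in_keys_iff)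
  then show ?thesis using pm_expand by metis
qed

lemma mult_expand: "(p::dpoly) * q = (\<Sum>a\<in>KS p. \<Sum>b\<in>KS q. SG (a+b) (LK p a * LK q b))"
proof -
  have "p * q = (\<Sum>a\<in>KS p. SG a (LK p a)) * (\<Sum>b\<in>KS q. SG b (LK q b))"
    by (simp only: pm_expand[of p, symmetric] pm_expand[of q, symmetric])
  also have "\<dots> = (\<Sum>a\<in>KS p. \<Sum>b\<in>KS q. SG (a+b) (LK p a * LK q b))"
    apply (simp add: sum_distrib_left sum_distrib_right mult_single)
    by (rule sum.swap)
  finally show ?thesis .
qed

lemma ddeg_gen: "finite V \<Longrightarrow> KS m \<subseteq> V \<Longrightarrow> ddeg m = (\<Sum>v\<in>V. LK m v * snd v)"
  unfolding ddeg_def by (rule sum.mono_neutral_left) (auto simp: in_keys_iff)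

lemma ddeg_add: "ddeg (a + b) = ddeg a + ddeg b"
proof -
  let ?V = "KS a \<union> KS b"
  have "ddeg (a+b) = (\<Sum>v\<in>?V. LK (a+b) v * snd v)"
    using keys_add[of a b] by (intro ddeg_gen) auto
  also have "\<dots> = (\<Sum>v\<in>?V. LK a v * snd v) + (\<Sum>v\<in>?V. LK b v * snd v)"
    by (simp add: lookup_add sum.distrib algebra_simps)
  also have "\<dots> = ddeg a + ddeg b"
    using ddeg_gen[of ?V a] ddeg_gen[of ?V b] by auto
  finally show ?thesis .
qed

lemma ddeg_zero[simp]: "ddeg 0 = 0" by (simp add: ddeg_def)

lemma ddeg_single: "ddeg (SG v (n::nat)) = n * snd v"
  by (simp add: ddeg_def)

definition DD :: "nat \<Rightarrow> dpoly \<Rightarrow> dpoly" where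
  "DD d p = (\<Sum>m\<in>{m\<in>KS p. ddeg m = d}. SG m (LK p m))"

lemma deg1_DD: "deg1 = DD 1"
  by (rule ext) (simp add: deg1_def DD_def)

lemma lookup_DD: "LK (DD d p) k = (if ddeg k = d then LK p k else 0)"
proof -
  have "LK (DD d p) k = (\<Sum>m\<in>{m\<in>KS p. ddeg m = d}. (LK p m when m = k))"
    by (simp add: DD_def lookup_sum lookup_single)
  also have "\<dots> = (if ddeg k = d then LK p k else 0)"
  proof (cases "k \<in> {m\<in>KS p. ddeg m = d}")
    case True
    then show ?thesis by (simp add: when_def sum.delta)
  next
    case False
    then have "\<forall>m\<in>{m\<in>KS p. ddeg m = d}. (LK p m when m = k) = 0" by (auto simp: when_def)
    then show ?thesis using False by (auto simp: in_keys_iff)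
  qed
  finally show ?thesis .
qed

lemma DD_add: "DD d (p + q) = DD d p + DD d q"
  by (rule poly_mapping_eqI) (simp add: lookup_DD lookup_add)
lemma DD_diff: "DD d (p - q) = DD d p - DD d q"
  by (rule poly_mapping_eqI) (simp add: lookup_DD lookup_minus)
lemma DD_uminus: "DD d (- p) = - DD d p"
  by (rule poly_mapping_eqI) (simp add: lookup_DD)
lemma DD_zero[simp]: "DD d 0 = 0"
  by (rule poly_mapping_eqI) (simp add: lookup_DD)
lemma DD_sum: "DD d (sum f A) = (\<Sum>x\<in>A. DD d (f x))"
  by (induction A rule: infinite_finite_induct) (auto simp: DD_add)
lemma DD_single: "DD d (SG m c) = (if ddeg m = d then SG m c else 0)"
  by (rule poly_mapping_eqI) (auto simp: lookup_DD lookup_single when_def)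

lemma DD_expand: "DD i p = (\<Sum>a\<in>KS p. if ddeg a = i then SG a (LK p a) else 0)"
proof -
  have "DD i p = DD i (\<Sum>a\<in>KS p. SG a (LK p a))" by (simp only: pm_expand[of p, symmetric])
  then show ?thesis by (simp add: DD_sum DD_single)
qed

lemma DD_mult_gen: "DD d ((p::dpoly) * q) = (\<Sum>i\<le>d. DD i p * DD (d - i) q)"
proof -
  have "DD d (p * q) = (\<Sum>a\<in>KS p. \<Sum>b\<in>KS q. if ddeg a + ddeg b = d then SG (a+b) (LK p a * LK q b) else 0)"
    unfolding mult_expand[of p q] by (simp add: DD_sum DD_single ddeg_add)
  also have "\<dots> = (\<Sum>a\<in>KS p. \<Sum>b\<in>KS q. \<Sum>i\<le>d. (if ddeg a = i then SG a (LK p a) else 0) * (if ddeg b = d - i then SG b (LK q b) else 0))"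
  proof (intro sum.cong refl)
    fix a b
    show "(if ddeg a + ddeg b = d then SG (a+b) (LK p a * LK q b) else 0) =
      (\<Sum>i\<le>d. (if ddeg a = i then SG a (LK p a) else 0) * (if ddeg b = d - i then SG b (LK q b) else 0))"
    proof (cases "ddeg a \<le> d")
      case True
      have "(\<Sum>i\<le>d. (if ddeg a = i then SG a (LK p a) else 0) * (if ddeg b = d - i then SG b (LK q b) else 0))
        = (\<Sum>i\<le>d. if i = ddeg a then (if ddeg b = d - ddeg a then SG (a+b) (LK p a * LK q b) else 0) else 0)"
        by (intro sum.cong refl) (auto simp: mult_single)
      also have "\<dots> = (if ddeg b = d - ddeg a then SG (a+b) (LK p a * LK q b) else 0)"
        using True by (simp add: sum.delta')
      finally show ?thesis using True by auto
    next
      case False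
      then show ?thesis by (auto intro!: sum.neutral[symmetric])
    qed
  qed
  also have "\<dots> = (\<Sum>i\<le>d. (\<Sum>a\<in>KS p. if ddeg a = i then SG a (LK p a) else 0) * (\<Sum>b\<in>KS q. if ddeg b = d - i then SG b (LK q b) else 0))"
    apply (simp add: sum_distrib_left sum_distrib_right sum.swap[of _ "{..d}"])
    apply (rule sum.cong[OF refl]) by (rule sum.swap)
  also have "\<dots> = (\<Sum>i\<le>d. DD i p * DD (d - i) q)"
    by (simp add: DD_expand)
  finally show ?thesis .
qed

lemma DD0_mult: "DD 0 ((p::dpoly) * q) = DD 0 p * DD 0 q"
  using DD_mult_gen[of 0 p q] by simp

lemma DD1_mult: "DD 1 ((p::dpoly) * q) = DD 0 p * DD 1 q + DD 1 p * DD 0 q"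
  using DD_mult_gen[of 1 p q] by (simp add: atMost_Suc add.commute)

lemma DD_rconst: "DD d (rconst c) = (if d = 0 then rconst c else 0)"
  by (simp add: rconst_def DD_single)

lemma DD_one: "DD d 1 = (if d = 0 then 1 else 0)"
  using DD_rconst[of d 1] by (simp add: rconst_def)

lemma DD_rconst_mult: "DD d (rconst c * p) = rconst c * DD d p"
proof (cases d)
  case 0 then show ?thesis by (simp add: DD0_mult DD_rconst)
next
  case (Suc d')
  show ?thesis unfolding DD_mult_gen
    by (subst sum.atMost_shift) (simp add: DD_rconst Suc)
qed

lemma DD_fvar0: "DD d (fvar j 0) = (if d = 0 then fvar j 0 else 0)"
  by (simp add: fvar_def DD_single ddeg_single)

lemma DD_DD: "DD d (DD e p) = (if d = e then DD d p else 0)"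
  by (rule poly_mapping_eqI) (simp add: lookup_DD)


definition sh :: "monom \<Rightarrow> nat \<times> nat \<Rightarrow> monom" where
  "sh m v = m - SG v 1 + SG (fst v, Suc (snd v)) 1"

lemma dx_gen: assumes "finite K" "KS p \<subseteq> K"
  shows "dx p = (\<Sum>m\<in>K. \<Sum>v\<in>KS m. SG (sh m v) (LK p m * of_nat (LK m v)))"
  unfolding dx_def sh_def
  by (rule sum.mono_neutral_left[OF assms]) (auto simp: in_keys_iff)

lemma dx_add: "dx (p + q) = dx p + dx q"
proof -
  let ?K = "KS p \<union> KS q"
  have f: "finite ?K" by simp
  have "dx (p+q) = (\<Sum>m\<in>?K. \<Sum>v\<in>KS m. SG (sh m v) (LK (p+q) m * of_nat (LK m v)))"
    using keys_add[of p q] by (intro dx_gen) auto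
  also have "\<dots> = (\<Sum>m\<in>?K. \<Sum>v\<in>KS m. SG (sh m v) (LK p m * of_nat (LK m v)))
     + (\<Sum>m\<in>?K. \<Sum>v\<in>KS m. SG (sh m v) (LK q m * of_nat (LK m v)))"
    by (simp add: lookup_add distrib_right single_add sum.distrib)
  also have "\<dots> = dx p + dx q"
    using dx_gen[OF f, of p] dx_gen[OF f, of q] by auto
  finally show ?thesis .
qed

lemma dx_zero[simp]: "dx 0 = 0" by (simp add: dx_def)

lemma dx_uminus: "dx (- p) = - dx p"
proof -
  have "dx p + dx (-p) = 0" using dx_add[of p "-p"] by simp
  then show ?thesis by (simp add: eq_neg_iff_add_eq_0 add.commute)
qed

lemma dx_diff: "dx (p - q) = dx p - dx q"
  using dx_add[of p "-q"] by (simp add: dx_uminus)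

lemma dx_sum: "dx (sum f A) = (\<Sum>x\<in>A. dx (f x))"
  by (induction A rule: infinite_finite_induct) (auto simp: dx_add)

lemma dx_single_gen: assumes "finite V" "KS m \<subseteq> V"
  shows "dx (SG m c) = (\<Sum>v\<in>V. SG (sh m v) (c * of_nat (LK m v)))"
proof -
  have "dx (SG m c) = (\<Sum>m'\<in>{m}. \<Sum>v\<in>KS m'. SG (sh m' v) (LK (SG m c) m' * of_nat (LK m' v)))"
    by (rule dx_gen) auto
  also have "\<dots> = (\<Sum>v\<in>KS m. SG (sh m v) (c * of_nat (LK m v)))" by simp
  also have "\<dots> = (\<Sum>v\<in>V. SG (sh m v) (c * of_nat (LK m v)))"
    by (rule sum.mono_neutral_left[OF assms]) (auto simp: in_keys_iff)
  finally show ?thesis .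
qed

lemma dx_single: "dx (SG m c) = (\<Sum>v\<in>KS m. SG (sh m v) (c * of_nat (LK m v)))"
  by (rule dx_single_gen) auto

lemma sh_add1: fixes b :: monom assumes "v \<in> KS a" shows "sh a v + b = sh (a + b) v"
proof (rule poly_mapping_eqI)
  fix k
  have "LK a v \<ge> 1" using assms by (simp add: in_keys_iff)
  then show "LK (sh a v + b) k = LK (sh (a + b) v) k"
    by (auto simp: sh_def lookup_add lookup_minus lookup_single when_def)
qed

lemma sh_add2: assumes "v \<in> KS b" shows "a + sh b v = sh (a + b) v"
  using sh_add1[OF assms, of a] by (simp add: add.commute)

lemma dx_single_mult: "dx (SG a c * SG b e) = dx (SG a c) * SG b e + SG a c * dx (SG b e)"
proof -
  let ?V = "KS a \<union> KS b"
  have f: "finite ?V" by simp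
  have "dx (SG a c * SG b e) = dx (SG (a+b) (c*e))" by (simp add: mult_single)
  also have "\<dots> = (\<Sum>v\<in>?V. SG (sh (a+b) v) (c * e * of_nat (LK (a+b) v)))"
    using keys_add[of a b] by (intro dx_single_gen) auto
  also have "\<dots> = (\<Sum>v\<in>?V. SG (sh (a+b) v) (c * e * of_nat (LK a v)))
                 + (\<Sum>v\<in>?V. SG (sh (a+b) v) (c * e * of_nat (LK b v)))"
    by (simp add: lookup_add distrib_left single_add sum.distrib)
  also have "(\<Sum>v\<in>?V. SG (sh (a+b) v) (c * e * of_nat (LK a v)))
     = (\<Sum>v\<in>?V. SG (sh a v) (c * of_nat (LK a v)) * SG b e)"
  proof (rule sum.cong[OF refl])
    fix v assume "v \<in> ?V"
    show "SG (sh (a+b) v) (c * e * of_nat (LK a v)) = SG (sh a v) (c * of_nat (LK a v)) * SG b e"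
    proof (cases "v \<in> KS a")
      case True
      then have "SG (sh a v) (c * of_nat (LK a v)) * SG b e = SG (sh (a+b) v) (c * of_nat (LK a v) * e)"
        by (simp only: mult_single sh_add1[OF True])
      then show ?thesis by (simp add: mult_ac)
    next
      case False
      then show ?thesis by (simp add: in_keys_iff)
    qed
  qed
  also have "\<dots> = dx (SG a c) * SG b e"
    using dx_single_gen[OF f, of a c] by (simp add: sum_distrib_right)
  also have "(\<Sum>v\<in>?V. SG (sh (a+b) v) (c * e * of_nat (LK b v)))
     = (\<Sum>v\<in>?V. SG a c * SG (sh b v) (e * of_nat (LK b v)))"
  proof (rule sum.cong[OF refl])
    fix v assume "v \<in> ?V"
    show "SG (sh (a+b) v) (c * e * of_nat (LK b v)) = SG a c * SG (sh b v) (e * of_nat (LK b v))"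
    proof (cases "v \<in> KS b")
      case True
      then have "SG a c * SG (sh b v) (e * of_nat (LK b v)) = SG (sh (a+b) v) (c * (e * of_nat (LK b v)))"
        by (simp only: mult_single sh_add2[OF True])
      then show ?thesis by (simp add: mult_ac)
    next
      case False
      then show ?thesis by (simp add: in_keys_iff)
    qed
  qed
  also have "\<dots> = SG a c * dx (SG b e)"
    using dx_single_gen[OF f, of b e] by (simp add: sum_distrib_left)
  finally show ?thesis .
qed

lemma dx_mult: "dx ((p::dpoly) * q) = dx p * q + p * dx q"
proof -
  have "p * q = (\<Sum>a\<in>KS p. \<Sum>b\<in>KS q. SG a (LK p a) * SG b (LK q b))"
    unfolding mult_expand[of p q] by (simp add: mult_single)
  then have "dx (p * q) = (\<Sum>a\<in>KS p. \<Sum>b\<in>KS q. dx (SG a (LK p a) * SG b (LK q b)))"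
    by (simp add: dx_sum)
  also have "\<dots> = (\<Sum>a\<in>KS p. \<Sum>b\<in>KS q. dx (SG a (LK p a)) * SG b (LK q b))
     + (\<Sum>a\<in>KS p. \<Sum>b\<in>KS q. SG a (LK p a) * dx (SG b (LK q b)))"
    by (simp add: dx_single_mult sum.distrib)
  also have "\<dots> = dx (\<Sum>a\<in>KS p. SG a (LK p a)) * (\<Sum>b\<in>KS q. SG b (LK q b))
      + (\<Sum>a\<in>KS p. SG a (LK p a)) * dx (\<Sum>b\<in>KS q. SG b (LK q b))"
    by (simp add: dx_sum sum_distrib_left sum_distrib_right sum.swap[of _ "KS q" "KS p"])
  also have "\<dots> = dx p * q + p * dx q" by (simp only: pm_expand[of p, symmetric] pm_expand[of q, symmetric])
  finally show ?thesis .
qed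

lemma dx_rconst[simp]: "dx (rconst c) = 0"
  by (simp add: rconst_def dx_single)

lemma dx_one[simp]: "dx 1 = 0"
  using dx_rconst[of 1] by (simp add: rconst_def)

lemma dx_rconst_mult: "dx (rconst c * p) = rconst c * dx p"
  by (simp add: dx_mult)

lemma dx_of_nat[simp]: "dx (of_nat n) = 0"
  using dx_rconst[of "of_nat n"] by (simp add: rconst_def)

lemma sub_add_single: fixes m :: monom assumes "v \<in> KS m" shows "m - SG v 1 + SG v 1 = m"
proof (rule poly_mapping_eqI)
  fix k
  have "LK m v \<ge> 1" using assms by (simp add: in_keys_iff)
  then show "LK (m - SG v 1 + SG v 1) k = LK m k"
    by (auto simp: lookup_add lookup_minus lookup_single when_def)
qed

lemma ddeg_sh: assumes "v \<in> KS m" shows "ddeg (sh m v) = Suc (ddeg m)"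
proof -
  have "ddeg m = ddeg (m - SG v 1) + snd v"
    using sub_add_single[OF assms] ddeg_add[of "m - SG v 1" "SG v 1"] by (simp add: ddeg_single)
  then show ?thesis by (simp add: sh_def ddeg_add ddeg_single)
qed

lemma DD_dx_single: "DD k (dx (SG m c)) = (if k = Suc (ddeg m) then dx (SG m c) else 0)"
proof -
  have "DD k (dx (SG m c)) = (\<Sum>v\<in>KS m. if k = Suc (ddeg m) then SG (sh m v) (c * of_nat (LK m v)) else 0)"
    unfolding dx_single DD_sum DD_single
    by (intro sum.cong refl) (auto simp: ddeg_sh)
  then show ?thesis by (simp add: dx_single)
qed

lemma DD_dx_Suc: "DD (Suc d) (dx p) = dx (DD d p)"
proof -
  have "DD (Suc d) (dx p) = DD (Suc d) (dx (\<Sum>a\<in>KS p. SG a (LK p a)))"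
    by (simp only: pm_expand[of p, symmetric])
  also have "\<dots> = (\<Sum>a\<in>KS p. if ddeg a = d then dx (SG a (LK p a)) else 0)"
    by (simp add: dx_sum DD_sum DD_dx_single eq_commute)
  also have "\<dots> = dx (DD d p)"
    by (simp add: DD_expand dx_sum) (rule sum.cong, auto)
  finally show ?thesis .
qed

lemma DD_dx_0: "DD 0 (dx p) = 0"
proof -
  have "DD 0 (dx p) = DD 0 (dx (\<Sum>a\<in>KS p. SG a (LK p a)))"
    by (simp only: pm_expand[of p, symmetric])
  also have "\<dots> = 0"
    by (simp add: dx_sum DD_sum DD_dx_single)
  finally show ?thesis .
qed

lemma DD0_dxpow: assumes "m > 0" shows "DD 0 ((dx ^^ m) p) = 0"
proof -
  have "m = Suc (m - 1)" using assms by arith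
  then have "(dx ^^ m) p = dx ((dx ^^ (m - 1)) p)" by (metis funpow.simps(2) comp_apply)
  then show ?thesis by (simp add: DD_dx_0)
qed

lemma DD1_dxpow2: assumes "m > 1" shows "DD 1 ((dx ^^ m) p) = 0"
proof -
  have "m = Suc (Suc (m - 2))" using assms by arith
  then have "(dx ^^ m) p = dx (dx ((dx ^^ (m - 2)) p))" by (metis funpow.simps(2) comp_apply)
  then show ?thesis using DD_dx_Suc[of 0 "dx ((dx ^^ (m - 2)) p)"] by (simp add: DD_dx_0)
qed

lemma DD1_dx: "DD 1 (dx p) = dx (DD 0 p)"
  using DD_dx_Suc[of 0] by simp

lemma of_nat_dpoly: "(of_nat n :: dpoly) = rconst (of_nat n)"
  by (simp add: rconst_def)

lemma rconst_mult: "rconst a * rconst b = rconst (a * b)"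
  by (simp add: rconst_def mult_single)
lemma rconst_add: "rconst (a + b) = rconst a + rconst b"
  by (simp add: rconst_def single_add)
lemma rconst_one[simp]: "rconst 1 = 1" by (simp add: rconst_def)
lemma rconst_zero[simp]: "rconst 0 = 0" by (simp add: rconst_def)

lemma rconst_cancel: assumes "(r::nat) > 0" "of_nat r * x = (of_nat r * y :: dpoly)" shows "x = y"
proof -
  have 1: "rconst (1 / of_nat r) * of_nat r = 1"
    unfolding of_nat_dpoly rconst_mult using assms(1) by simp
  have "x = (rconst (1 / of_nat r) * of_nat r) * x" by (simp only: 1 mult_1_left)
  also have "\<dots> = rconst (1 / of_nat r) * (of_nat r * x)" by (simp only: mult.assoc)
  also have "\<dots> = rconst (1 / of_nat r) * (of_nat r * y)" using assms(2) by simp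
  also have "\<dots> = (rconst (1 / of_nat r) * of_nat r) * y" by (simp only: mult.assoc)
  also have "\<dots> = y" by (simp only: 1 mult_1_left)
  finally show ?thesis .
qed


definition bnd :: "(int \<Rightarrow> 'a::zero) \<Rightarrow> int \<Rightarrow> bool" where
  "bnd A N \<longleftrightarrow> (\<forall>n>N. A n = 0)"

lemma bnd_mono: "bnd A N \<Longrightarrow> N \<le> N' \<Longrightarrow> bnd A N'"
  by (auto simp: bnd_def)

lemma ub_bnd: "bnd A N \<Longrightarrow> bnd A (ub A)"
  unfolding ub_def bnd_def by (rule someI_ex) blast

lemma bndD: "bnd A N \<Longrightarrow> n > N \<Longrightarrow> A n = 0"
  by (auto simp: bnd_def)

lemma dxpow_zero[simp]: "(dx ^^ m) 0 = 0"
  by (induction m) auto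

definition lsum :: "(int \<Rightarrow> dpoly) \<Rightarrow> (int \<Rightarrow> dpoly) \<Rightarrow> int \<Rightarrow> int \<Rightarrow> int \<Rightarrow> dpoly" where
  "lsum A B NA NB n = (\<Sum>k\<in>{n - NB..NA}. A k * B (n - k))"

lemma lsum_mono: assumes "bnd A NA" "bnd B NB" "NA \<le> NA'" "NB \<le> NB'"
  shows "lsum A B NA NB n = lsum A B NA' NB' n"
  unfolding lsum_def
proof (rule sum.mono_neutral_left)
  show "\<forall>i\<in>{n - NB'..NA'} - {n - NB..NA}. A i * B (n - i) = 0"
  proof
    fix i assume "i \<in> {n - NB'..NA'} - {n - NB..NA}"
    then have "i > NA \<or> n - i > NB" by auto
    then show "A i * B (n - i) = 0" using assms(1,2) by (auto simp: bnd_def)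
  qed
qed (use assms in auto)

lemma lsum_indep: assumes "bnd A NA" "bnd B NB" "bnd A NA'" "bnd B NB'"
  shows "lsum A B NA NB n = lsum A B NA' NB' n"
  using lsum_mono[OF assms(1,2), of "max NA NA'" "max NB NB'"]
        lsum_mono[OF assms(3,4), of "max NA NA'" "max NB NB'"] by simp

lemma lmult_eq: assumes "bnd A NA" "bnd B NB"
  shows "lmult A B n = (\<Sum>k\<in>{n - NB..NA}. A k * B (n - k))"
proof -
  have "lmult A B n = lsum A B (ub A) (ub B) n" by (simp add: lmult_def lsum_def)
  also have "\<dots> = lsum A B NA NB n"
    by (rule lsum_indep) (use assms ub_bnd in auto)
  finally show ?thesis by (simp add: lsum_def)
qed

lemma bnd_lmult: assumes "bnd A NA" "bnd B NB" shows "bnd (lmult A B) (NA + NB)"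
  unfolding bnd_def
proof (intro allI impI)
  fix n assume "n > NA + NB"
  then have "{n - NB..NA} = {}" by auto
  then show "lmult A B n = 0" by (simp add: lmult_eq[OF assms])
qed

definition tt :: "(int \<Rightarrow> dpoly) \<Rightarrow> (int \<Rightarrow> dpoly) \<Rightarrow> int \<Rightarrow> int \<Rightarrow> int \<Rightarrow> dpoly" where
  "tt P R n k l = rconst ((of_int k :: rat) gchoose (nat (k + l - n))) * P k
        * (dx ^^ nat (k + l - n)) (R l)"

definition psum :: "(int \<Rightarrow> dpoly) \<Rightarrow> (int \<Rightarrow> dpoly) \<Rightarrow> int \<Rightarrow> int \<Rightarrow> int \<Rightarrow> dpoly" where
  "psum P R NP NR n = (\<Sum>k\<in>{n - NR..NP}. \<Sum>l\<in>{n - k..NR}. tt P R n k l)"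

lemma tt_zero1: "P k = 0 \<Longrightarrow> tt P R n k l = 0" by (simp add: tt_def)
lemma tt_zero2: "R l = 0 \<Longrightarrow> tt P R n k l = 0" by (simp add: tt_def)

lemma psum_mono: assumes "bnd P NP" "bnd R NR" "NP \<le> NP'" "NR \<le> NR'"
  shows "psum P R NP NR n = psum P R NP' NR' n"
proof -
  have inner: "(\<Sum>l\<in>{n - k..NR}. tt P R n k l) = (\<Sum>l\<in>{n - k..NR'}. tt P R n k l)" for k
    by (rule sum.mono_neutral_left) (use assms in \<open>auto simp: bnd_def intro!: tt_zero2\<close>)
  have "psum P R NP NR n = (\<Sum>k\<in>{n - NR..NP}. \<Sum>l\<in>{n - k..NR'}. tt P R n k l)"
    unfolding psum_def using inner by simp
  also have "\<dots> = (\<Sum>k\<in>{n - NR'..NP'}. \<Sum>l\<in>{n - k..NR'}. tt P R n k l)"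
  proof (rule sum.mono_neutral_left)
    show "\<forall>i\<in>{n - NR'..NP'} - {n - NR..NP}. (\<Sum>l\<in>{n - i..NR'}. tt P R n i l) = 0"
    proof
      fix i assume i: "i \<in> {n - NR'..NP'} - {n - NR..NP}"
      show "(\<Sum>l\<in>{n - i..NR'}. tt P R n i l) = 0"
      proof (cases "i > NP")
        case True
        then show ?thesis using assms(1) by (auto simp: bnd_def intro!: sum.neutral tt_zero1)
      next
        case False
        then have "n - i > NR" using i by auto
        then show ?thesis using assms(2) by (auto simp: bnd_def intro!: sum.neutral tt_zero2)
      qed
    qed
  qed (use assms in auto)
  finally show ?thesis by (simp add: psum_def)
qed

lemma psum_indep: assumes "bnd P NP" "bnd R NR" "bnd P NP'" "bnd R NR'"
  shows "psum P R NP NR n = psum P R NP' NR' n"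
  using psum_mono[OF assms(1,2), of "max NP NP'" "max NR NR'"]
        psum_mono[OF assms(3,4), of "max NP NP'" "max NR NR'"] by simp

lemma pdo_mult_eq: assumes "bnd P NP" "bnd R NR"
  shows "pdo_mult P R n = (\<Sum>k\<in>{n - NR..NP}. \<Sum>l\<in>{n - k..NR}. tt P R n k l)"
proof -
  have "pdo_mult P R n = psum P R (ub P) (ub R) n" by (simp add: pdo_mult_def psum_def tt_def)
  also have "\<dots> = psum P R NP NR n"
    by (rule psum_indep) (use assms ub_bnd in auto)
  finally show ?thesis by (simp add: psum_def)
qed

lemma bnd_pdo_mult: assumes "bnd P NP" "bnd R NR" shows "bnd (pdo_mult P R) (NP + NR)"
  unfolding bnd_def
proof (intro allI impI)
  fix n assume "n > NP + NR"
  then have "{n - NR..NP} = {}" by auto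
  then show "pdo_mult P R n = 0" by (simp add: pdo_mult_eq[OF assms])
qed

lemma pdo_mult_top: assumes "bnd P NP" "bnd R NR"
  shows "pdo_mult P R (NP + NR) = P NP * R NR"
  by (simp add: pdo_mult_eq[OF assms] tt_def)

lemma bnd_lone: "bnd lone 0" by (simp add: bnd_def lone_def)

definition qf :: "(int \<Rightarrow> dpoly) \<Rightarrow> bool" where
  "qf Q \<longleftrightarrow> Q 1 = 1 \<and> (\<forall>n>1. Q n = 0)"

lemma qf_bnd: "qf Q \<Longrightarrow> bnd Q 1" by (simp add: qf_def bnd_def)

lemma pow_bnd: "qf Q \<Longrightarrow> bnd (pdo_pow Q j) (int j) \<and> pdo_pow Q j (int j) = 1"
proof (induction j)
  case 0
  then show ?case by (simp add: lone_def bnd_def)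
next
  case (Suc j)
  have b: "bnd Q 1" using qf_bnd[OF Suc.prems] .
  have "bnd (pdo_pow Q (Suc j)) (int j + 1)"
    using bnd_pdo_mult[OF conjunct1[OF Suc.IH[OF Suc.prems]] b] by simp
  moreover have "pdo_pow Q (Suc j) (int j + 1) = 1"
    using pdo_mult_top[OF conjunct1[OF Suc.IH[OF Suc.prems]] b] Suc.IH[OF Suc.prems] Suc.prems
    by (simp add: qf_def)
  ultimately show ?case by (simp add: add.commute)
qed

lemma dsum_delta: assumes "finite K" "\<And>k. finite (L k)" "k0 \<in> K" "l0 \<in> L k0"
  shows "(\<Sum>k\<in>K. \<Sum>l\<in>L k. if k = k0 \<and> l = l0 then c else 0) = c"
proof -
  have "(\<Sum>k\<in>K. \<Sum>l\<in>L k. if k = k0 \<and> l = l0 then c else 0)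
      = (\<Sum>k\<in>K. if k = k0 then (\<Sum>l\<in>L k. if l = l0 then c else 0) else 0)"
    by (rule sum.cong) auto
  also have "\<dots> = (\<Sum>l\<in>L k0. if l = l0 then c else 0)"
    using assms(1,3) by (simp add: sum.delta')
  also have "\<dots> = c" using assms(2,4) by (simp add: sum.delta')
  finally show ?thesis .
qed

lemma loc:
  assumes "qf Q" "qf Q'" "\<forall>i > - int n. Q i = Q' i"
  shows "(\<forall>i > int j - 1 - int n. pdo_pow Q j i = pdo_pow Q' j i)
       \<and> pdo_pow Q j (int j - 1 - int n) - pdo_pow Q' j (int j - 1 - int n)
          = of_nat j * (Q (- int n) - Q' (- int n))"
proof (induction j)
  case 0
  then show ?case by simp
next
  case (Suc j)
  define A where "A = pdo_pow Q j"
  define A' where "A' = pdo_pow Q' j"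
  have bA: "bnd A (int j)" and tA: "A (int j) = 1" using pow_bnd[OF assms(1)] by (auto simp: A_def)
  have bA': "bnd A' (int j)" and tA': "A' (int j) = 1" using pow_bnd[OF assms(2)] by (auto simp: A'_def)
  have bQ: "bnd Q 1" "bnd Q' 1" using qf_bnd assms by auto
  have IH1: "\<forall>i > int j - 1 - int n. A i = A' i" using Suc.IH by (simp add: A_def A'_def)
  have IH2: "A (int j - 1 - int n) - A' (int j - 1 - int n) = of_nat j * (Q (- int n) - Q' (- int n))"
    using Suc.IH by (simp add: A_def A'_def)
  have P: "pdo_pow Q (Suc j) N = (\<Sum>k\<in>{N - 1..int j}. \<Sum>l\<in>{N - k..1}. tt A Q N k l)" for N
    using pdo_mult_eq[OF bA bQ(1)] by (simp add: A_def)
  have P': "pdo_pow Q' (Suc j) N = (\<Sum>k\<in>{N - 1..int j}. \<Sum>l\<in>{N - k..1}. tt A' Q' N k l)" for N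
    using pdo_mult_eq[OF bA' bQ(2)] by (simp add: A'_def)
  have part1: "\<forall>i > int (Suc j) - 1 - int n. pdo_pow Q (Suc j) i = pdo_pow Q' (Suc j) i"
  proof (intro allI impI)
    fix N assume N: "N > int (Suc j) - 1 - int n"
    show "pdo_pow Q (Suc j) N = pdo_pow Q' (Suc j) N"
      unfolding P P'
    proof (intro sum.cong refl)
      fix k l assume k: "k \<in> {N - 1..int j}" and l: "l \<in> {N - k..1}"
      have "A k = A' k" using IH1 k N by auto
      moreover have "Q l = Q' l" using assms(3) k l N by auto
      ultimately show "tt A Q N k l = tt A' Q' N k l" by (simp add: tt_def)
    qed
  qed
  define N where "N = int j - int n"
  have diff: "tt A Q N k l - tt A' Q' N k l
      = (if k = N - 1 \<and> l = 1 then A (N - 1) - A' (N - 1) else 0)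
        + (if k = int j \<and> l = - int n then Q (- int n) - Q' (- int n) else 0)"
    if k: "k \<in> {N - 1..int j}" and l: "l \<in> {N - k..1}" for k l
  proof (cases "k = N - 1")
    case True
    then have "l = 1" using l by auto
    moreover have "k \<noteq> int j" using True by (simp add: N_def)
    ultimately show ?thesis using True assms(1,2)
      by (simp add: tt_def N_def qf_def)
  next
    case False
    show ?thesis
    proof (cases "l = - int n")
      case True
      then have "k = int j" using k l by (auto simp: N_def)
      then show ?thesis using True False tA tA' by (simp add: tt_def N_def algebra_simps)
    next
      case False2: False
      then have "l > - int n" using k l by (auto simp: N_def)
      moreover have "k > N - 1" using False k by auto
      ultimately have "A k = A' k" "Q l = Q' l" using IH1 assms(3) by (auto simp: N_def)
      then show ?thesis using False False2 by (simp add: tt_def)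
    qed
  qed
  have "pdo_pow Q (Suc j) N - pdo_pow Q' (Suc j) N
     = (\<Sum>k\<in>{N - 1..int j}. \<Sum>l\<in>{N - k..1}. tt A Q N k l - tt A' Q' N k l)"
    unfolding P P' by (simp add: sum_subtractf)
  also have "\<dots> = (\<Sum>k\<in>{N - 1..int j}. \<Sum>l\<in>{N - k..1}.
        (if k = N - 1 \<and> l = 1 then A (N - 1) - A' (N - 1) else 0)
        + (if k = int j \<and> l = - int n then Q (- int n) - Q' (- int n) else 0))"
    by (intro sum.cong refl diff) auto
  also have "\<dots> = (A (N - 1) - A' (N - 1)) + (Q (- int n) - Q' (- int n))"
    unfolding sum.distrib
    by (subst dsum_delta, simp, simp, simp add: N_def, simp,
        subst dsum_delta, simp, simp, simp add: N_def, simp add: N_def, rule refl)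
  also have "\<dots> = of_nat (Suc j) * (Q (- int n) - Q' (- int n))"
    using IH2 by (simp add: N_def algebra_simps)
  finally show ?case using part1 by (simp add: N_def)
qed


fun sq :: "nat \<Rightarrow> nat \<Rightarrow> int \<Rightarrow> dpoly" where
  "sq r 0 = (\<lambda>i. if i = 1 then 1 else 0)"
| "sq r (Suc n) = (sq r n)(- int n := sq r n (- int n)
     + rconst (1 / of_nat r) * (L0 r (int r - 1 - int n) - pdo_pow (sq r n) r (int r - 1 - int n)))"

lemma qf_sq: "qf (sq r n)"
  by (induction n) (auto simp: qf_def)

lemma L0_top: "L0 r (int r) = 1" by (simp add: L0_def)
lemma L0_above: "i > int r \<Longrightarrow> L0 r i = 0" by (simp add: L0_def)

lemma sq_good: assumes "r > 0" shows "\<forall>i > int r - 1 - int n. pdo_pow (sq r n) r i = L0 r i"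
proof (induction n)
  case 0
  have b: "bnd (pdo_pow (sq r 0) r) (int r)" and t: "pdo_pow (sq r 0) r (int r) = 1"
    using pow_bnd[OF qf_sq[of r 0]] by auto
  show ?case
  proof (intro allI impI)
    fix i assume "i > int r - 1 - int 0"
    then have "i = int r \<or> i > int r" by auto
    then show "pdo_pow (sq r 0) r i = L0 r i"
      using b t L0_top L0_above by (auto simp: bnd_def)
  qed
next
  case (Suc n)
  let ?Q = "sq r n" and ?Q' = "sq r (Suc n)"
  have agree: "\<forall>i > - int n. ?Q' i = ?Q i" by auto
  have L: "(\<forall>i > int r - 1 - int n. pdo_pow ?Q' r i = pdo_pow ?Q r i)
       \<and> pdo_pow ?Q' r (int r - 1 - int n) - pdo_pow ?Q r (int r - 1 - int n)
          = of_nat r * (?Q' (- int n) - ?Q (- int n))"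
    by (rule loc[OF qf_sq qf_sq agree])
  have "of_nat r * (?Q' (- int n) - ?Q (- int n))
      = of_nat r * (rconst (1 / of_nat r) * (L0 r (int r - 1 - int n) - pdo_pow ?Q r (int r - 1 - int n)))"
    by simp
  also have "\<dots> = L0 r (int r - 1 - int n) - pdo_pow ?Q r (int r - 1 - int n)"
    using assms by (simp add: of_nat_dpoly mult.assoc[symmetric] rconst_mult del: of_nat_diff)
  finally have "pdo_pow ?Q' r (int r - 1 - int n) = L0 r (int r - 1 - int n)"
    using L by (simp add: algebra_simps)
  show ?case
  proof (intro allI impI)
    fix i assume i: "i > int r - 1 - int (Suc n)"
    show "pdo_pow ?Q' r i = L0 r i"
    proof (cases "i = int r - 1 - int n")
      case True
      then show ?thesis using \<open>pdo_pow ?Q' r (int r - 1 - int n) = L0 r (int r - 1 - int n)\<close> by simp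
    next
      case False
      then have "i > int r - 1 - int n" using i by auto
      then show ?thesis using L Suc.IH by auto
    qed
  qed
qed

lemma sq_stable: "\<forall>i > - int m. sq r (m + d) i = sq r m i"
  by (induction d) auto

definition QL :: "nat \<Rightarrow> int \<Rightarrow> dpoly" where
  "QL r i = sq r (nat (1 - i)) i"

lemma QL_agree: "\<forall>i > - int n. QL r i = sq r n i"
proof (intro allI impI)
  fix i assume i: "i > - int n"
  define m where "m = nat (1 - i)"
  have "m \<le> n" using i by (simp add: m_def)
  have "i > - int m" by (simp add: m_def)
  then have "sq r (m + (n - m)) i = sq r m i" using sq_stable by blast
  then show "QL r i = sq r n i" using \<open>m \<le> n\<close> by (simp add: QL_def m_def)
qed

lemma qf_QL: "qf (QL r)"
  using qf_sq[of r 0] QL_agree[of 0 r] by (auto simp: qf_def)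

lemma QL_root: assumes "r > 0" shows "pdo_pow (QL r) r = L0 r"
proof
  fix i
  define n where "n = nat (int r - i)"
  have "\<forall>i > - int n. QL r i = sq r n i" by (rule QL_agree)
  from loc[OF qf_QL qf_sq this, of r]
  have "\<forall>i' > int r - 1 - int n. pdo_pow (QL r) r i' = pdo_pow (sq r n) r i'" by blast
  moreover have "i > int r - 1 - int n" by (simp add: n_def)
  ultimately show "pdo_pow (QL r) r i = L0 r i" using sq_good[OF assms, of n] by auto
qed

lemma root_unique: assumes "r > 0" "qf Q" "qf Q'" "pdo_pow Q r = pdo_pow Q' r"
  shows "Q = Q'"
proof -
  have "\<forall>i > - int n. Q i = Q' i" for n
  proof (induction n)
    case 0
    show ?case
    proof (intro allI impI)
      fix i :: int assume "i > - int 0"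
      then have "i = 1 \<or> i > 1" by auto
      then show "Q i = Q' i" using assms(2,3) by (auto simp: qf_def)
    qed
  next
    case (Suc n)
    from loc[OF assms(2,3) Suc.IH, of r] assms(4)
    have "of_nat r * (Q (- int n) - Q' (- int n)) = 0" by simp
    then have "of_nat r * Q (- int n) = of_nat r * Q' (- int n)" by (simp add: algebra_simps)
    then have "Q (- int n) = Q' (- int n)" by (rule rconst_cancel[OF assms(1)])
    show ?case
    proof (intro allI impI)
      fix i assume i: "i > - int (Suc n)"
      show "Q i = Q' i"
      proof (cases "i = - int n")
        case True then show ?thesis using \<open>Q (- int n) = Q' (- int n)\<close> by simp
      next
        case False then have "i > - int n" using i by auto
        then show ?thesis using Suc.IH by auto
      qed
    qed
  qed
  note all = this
  show ?thesis
  proof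
    fix i
    have "i > - int (nat (1 - i))" by arith
    then show "Q i = Q' i" using all by blast
  qed
qed

lemma root_props: assumes "r > 0"
  shows "qf (pdo_root r (L0 r)) \<and> pdo_pow (pdo_root r (L0 r)) r = L0 r"
proof -
  have ex: "\<exists>!Q. Q 1 = 1 \<and> (\<forall>n>1. Q n = 0) \<and> pdo_pow Q r = L0 r"
  proof (rule ex1I[of _ "QL r"])
    show "QL r 1 = 1 \<and> (\<forall>n>1. QL r n = 0) \<and> pdo_pow (QL r) r = L0 r"
      using qf_QL[of r] QL_root[OF assms] by (simp add: qf_def)
  next
    fix Q assume "Q 1 = 1 \<and> (\<forall>n>1. Q n = 0) \<and> pdo_pow Q r = L0 r"
    then show "Q = QL r" using root_unique[OF assms, of Q "QL r"] qf_QL[of r] QL_root[OF assms]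
      by (simp add: qf_def)
  qed
  show ?thesis using theI'[OF ex] unfolding pdo_root_def qf_def by blast
qed


definition ddf :: "nat \<Rightarrow> (int \<Rightarrow> dpoly) \<Rightarrow> int \<Rightarrow> dpoly" where
  "ddf d P = (\<lambda>n. DD d (P n))"

lemma bnd_ddf: "bnd P N \<Longrightarrow> bnd (ddf d P) N"
  by (simp add: bnd_def ddf_def)

lemma bnd_dz: "bnd P N \<Longrightarrow> bnd (dz P) (N - 1)"
  by (simp add: bnd_def dz_def)

lemma bnd_dxs: "bnd P N \<Longrightarrow> bnd (dxs P) N"
  by (simp add: bnd_def dxs_def)

lemma of_int_dpoly: "(of_int k :: dpoly) = rconst (of_int k)"
proof (cases "k \<ge> 0")
  case True
  then obtain n where "k = int n" by (intro that[of "nat k"]) auto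
  then show ?thesis by (simp add: of_nat_dpoly)
next
  case False
  then obtain n where "k = - int n" by (intro that[of "nat (- k)"]) auto
  moreover have "rconst (- a) = - rconst a" for a by (simp add: rconst_def single_uminus)
  ultimately show ?thesis by (simp add: of_nat_dpoly)
qed

lemmas DD1_mult' = DD1_mult[unfolded One_nat_def]
lemmas DD1_dx' = DD1_dx[unfolded One_nat_def]
lemmas DD1_dxpow2' = DD1_dxpow2[unfolded One_nat_def]

lemma tt_eq: "tt P R n k l = rconst ((of_int k :: rat) gchoose (nat (k + l - n))) * (P k * (dx ^^ nat (k + l - n)) (R l))"
  by (simp add: tt_def mult.assoc)

lemma DD0_tt: assumes "k + l \<ge> n"
  shows "DD 0 (tt P R n k l) = (if l = n - k then DD 0 (P k) * DD 0 (R l) else 0)"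
proof (cases "l = n - k")
  case True
  then have m: "nat (k + l - n) = 0" by simp
  show ?thesis unfolding tt_eq m using True
    by (simp only: DD_rconst_mult DD0_mult gbinomial_0 rconst_one funpow_0 mult_1_left simp_thms(6) if_True)
next
  case False
  then have "nat (k + l - n) > 0" using assms by auto
  then have "DD 0 ((dx ^^ nat (k + l - n)) (R l)) = 0" by (rule DD0_dxpow)
  then show ?thesis unfolding tt_eq using False
    by (simp only: DD_rconst_mult DD0_mult mult_zero_right if_False)
qed

lemma DD1_tt: assumes "k + l \<ge> n"
  shows "DD 1 (tt P R n k l) = (if l = n - k then DD 0 (P k) * DD 1 (R l) + DD 1 (P k) * DD 0 (R l) else 0)
     + (if l = n - k + 1 then rconst (of_int k) * DD 0 (P k) * dx (DD 0 (R l)) else 0)"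
proof (cases "l = n - k")
  case True
  then have m: "nat (k + l - n) = 0" by simp
  have "l \<noteq> n - k + 1" using True by simp
  then show ?thesis unfolding tt_eq m using True
    by (simp only: DD_rconst_mult DD1_mult gbinomial_0 rconst_one funpow_0 mult_1_left simp_thms(6) if_True if_False add_0_right)
next
  case False
  show ?thesis
  proof (cases "l = n - k + 1")
    case True
    then have m: "nat (k + l - n) = 1" by simp
    have "(dx ^^ 1) (R l) = dx (R l)" by simp
    then show ?thesis unfolding tt_eq m using True False
      by (simp only: DD_rconst_mult DD1_mult gbinomial_1 DD1_dx DD_dx_0 mult_zero_right add_0_right
          simp_thms(6) if_True if_False add_0_left mult.assoc)
  next
    case False2: False
    then have "nat (k + l - n) > 1" using assms False by auto
    then have "DD 1 ((dx ^^ nat (k + l - n)) (R l)) = 0" "DD 0 ((dx ^^ nat (k + l - n)) (R l)) = 0"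
      using DD1_dxpow2 DD0_dxpow by auto
    then show ?thesis unfolding tt_eq using False False2
      by (simp only: DD_rconst_mult DD1_mult mult_zero_right add_0_right if_False)
  qed
qed

lemma DD0_pdo_mult: assumes "bnd P NP" "bnd R NR"
  shows "ddf 0 (pdo_mult P R) = lmult (ddf 0 P) (ddf 0 R)"
proof
  fix n
  have "ddf 0 (pdo_mult P R) n = (\<Sum>k\<in>{n - NR..NP}. \<Sum>l\<in>{n - k..NR}. DD 0 (tt P R n k l))"
    by (simp add: ddf_def pdo_mult_eq[OF assms] DD_sum)
  also have "\<dots> = (\<Sum>k\<in>{n - NR..NP}. \<Sum>l\<in>{n - k..NR}. if l = n - k then DD 0 (P k) * DD 0 (R (n - k)) else 0)"
  proof (rule sum.cong[OF refl], rule sum.cong[OF refl])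
    fix k l assume k: "k \<in> {n - NR..NP}" and l: "l \<in> {n - k..NR}"
    then have "k + l \<ge> n" by auto
    from DD0_tt[OF this, of P R]
    show "DD 0 (tt P R n k l) = (if l = n - k then DD 0 (P k) * DD 0 (R (n - k)) else 0)" by simp
  qed
  also have "\<dots> = (\<Sum>k\<in>{n - NR..NP}. DD 0 (P k) * DD 0 (R (n - k)))"
  proof (rule sum.cong[OF refl])
    fix k assume k: "k \<in> {n - NR..NP}"
    then show "(\<Sum>l\<in>{n - k..NR}. if l = n - k then DD 0 (P k) * DD 0 (R (n - k)) else 0) = DD 0 (P k) * DD 0 (R (n - k))"
      by (simp add: sum.delta')
  qed
  also have "\<dots> = lmult (ddf 0 P) (ddf 0 R) n"
    unfolding lmult_eq[OF bnd_ddf[OF assms(1)] bnd_ddf[OF assms(2)]] by (simp add: ddf_def)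
  finally show "ddf 0 (pdo_mult P R) n = lmult (ddf 0 P) (ddf 0 R) n" .
qed

lemma sum_shift_int: "(\<Sum>k\<in>{a..b}. f (k + 1)) = (\<Sum>k\<in>{a+1..b+1::int}. f k)"
  by (rule sum.reindex_bij_witness[of _ "\<lambda>k. k - 1" "\<lambda>k. k + 1"]) simp_all

lemma DD1_pdo_mult: assumes "bnd P NP" "bnd R NR"
  shows "ddf 1 (pdo_mult P R) = (\<lambda>n. lmult (ddf 0 P) (ddf 1 R) n + lmult (ddf 1 P) (ddf 0 R) n
           + lmult (dz (ddf 0 P)) (dxs (ddf 0 R)) n)"
proof
  fix n
  define f where "f k = DD 0 (P k) * DD 1 (R (n - k)) + DD 1 (P k) * DD 0 (R (n - k))" for k
  define g where "g k = rconst (of_int k) * DD 0 (P k) * dx (DD 0 (R (n - k + 1)))" for k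
  have "ddf 1 (pdo_mult P R) n = (\<Sum>k\<in>{n - NR..NP}. \<Sum>l\<in>{n - k..NR}. DD 1 (tt P R n k l))"
    by (simp add: ddf_def pdo_mult_eq[OF assms] DD_sum)
  also have "\<dots> = (\<Sum>k\<in>{n - NR..NP}. \<Sum>l\<in>{n - k..NR}. (if l = n - k then f k else 0) + (if l = n - k + 1 then g k else 0))"
  proof (intro sum.cong refl)
    fix k l assume "k \<in> {n - NR..NP}" "l \<in> {n - k..NR}"
    then have "k + l \<ge> n" by auto
    from DD1_tt[OF this, of P R]
    show "DD 1 (tt P R n k l) = (if l = n - k then f k else 0) + (if l = n - k + 1 then g k else 0)"
      by (auto simp: f_def g_def)
  qed
  also have "\<dots> = (\<Sum>k\<in>{n - NR..NP}. f k + (if n - k + 1 \<le> NR then g k else 0))"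
  proof (rule sum.cong[OF refl])
    fix k assume k: "k \<in> {n - NR..NP}"
    have "(\<Sum>l\<in>{n - k..NR}. (if l = n - k then f k else 0) + (if l = n - k + 1 then g k else 0))
      = (\<Sum>l\<in>{n - k..NR}. if l = n - k then f k else 0) + (\<Sum>l\<in>{n - k..NR}. if l = n - k + 1 then g k else 0)"
      by (rule sum.distrib)
    also have "\<dots> = f k + (if n - k + 1 \<le> NR then g k else 0)"
      using k by (simp add: sum.delta')
    finally show "(\<Sum>l\<in>{n - k..NR}. (if l = n - k then f k else 0) + (if l = n - k + 1 then g k else 0))
      = f k + (if n - k + 1 \<le> NR then g k else 0)" .
  qed
  also have "\<dots> = (\<Sum>k\<in>{n - NR..NP}. f k) + (\<Sum>k\<in>{n + 1 - NR..NP}. g k)"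
  proof -
    have "(\<Sum>k\<in>{n - NR..NP}. (if n - k + 1 \<le> NR then g k else 0)) = (\<Sum>k\<in>{k\<in>{n - NR..NP}. n - k + 1 \<le> NR}. g k)"
      by (rule sum.inter_filter[symmetric]) simp
    also have "{k\<in>{n - NR..NP}. n - k + 1 \<le> NR} = {n + 1 - NR..NP}" by auto
    finally show ?thesis by (simp add: sum.distrib)
  qed
  also have "(\<Sum>k\<in>{n - NR..NP}. f k) = lmult (ddf 0 P) (ddf 1 R) n + lmult (ddf 1 P) (ddf 0 R) n"
    unfolding lmult_eq[OF bnd_ddf[OF assms(1)] bnd_ddf[OF assms(2)]] by (simp add: f_def ddf_def sum.distrib)
  also have "(\<Sum>k\<in>{n + 1 - NR..NP}. g k) = lmult (dz (ddf 0 P)) (dxs (ddf 0 R)) n"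
  proof -
    have "lmult (dz (ddf 0 P)) (dxs (ddf 0 R)) n = (\<Sum>k\<in>{n - NR..NP - 1}. g (k + 1))"
      unfolding lmult_eq[OF bnd_dz[OF bnd_ddf[OF assms(1)]] bnd_dxs[OF bnd_ddf[OF assms(2)]]]
      by (intro sum.cong refl) (simp add: g_def dz_def dxs_def ddf_def of_int_dpoly)
    also have "\<dots> = (\<Sum>k\<in>{n - NR + 1..NP - 1 + 1}. g k)" by (rule sum_shift_int)
    also have "{n - NR + 1..NP - 1 + 1} = {n + 1 - NR..NP}" by auto
    finally show ?thesis by simp
  qed
  finally show "ddf 1 (pdo_mult P R) n = lmult (ddf 0 P) (ddf 1 R) n + lmult (ddf 1 P) (ddf 0 R) n
           + lmult (dz (ddf 0 P)) (dxs (ddf 0 R)) n" by simp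
qed

unbundle fps_syntax


definition Tf :: "(int \<Rightarrow> dpoly) \<Rightarrow> dpoly fls" where
  "Tf A = Abs_fls (\<lambda>n. A (- n))"

lemma Tf_nth: assumes "bnd A N" shows "Tf A $$ n = A (- n)"
proof -
  have "\<forall>\<^sub>\<infinity>m. (\<lambda>n. A (- n)) (- int m) = 0"
    unfolding MOST_nat
  proof (intro exI[of _ "nat N"] allI impI)
    fix m assume "m > nat N"
    then have "int m > N" by linarith
    then show "(\<lambda>n. A (- n)) (- int m) = 0" using assms by (simp add: bnd_def)
  qed
  then show ?thesis unfolding Tf_def by simp
qed

lemma Tf_inj: assumes "bnd A NA" "bnd B NB" "Tf A = Tf B" shows "A = B"
proof
  fix n
  have "A n = Tf A $$ (- n)" using Tf_nth[OF assms(1)] by simp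
  also have "\<dots> = Tf B $$ (- n)" using assms(3) by simp
  also have "\<dots> = B n" using Tf_nth[OF assms(2)] by simp
  finally show "A n = B n" .
qed

lemma fls_mult_nth_gen:
  fixes F G :: "dpoly fls"
  assumes "\<forall>i<a. F $$ i = 0" "\<forall>i<b. G $$ i = 0"
  shows "(F * G) $$ n = (\<Sum>i\<in>{a..n - b}. F $$ i * G $$ (n - i))"
proof (cases "F = 0 \<or> G = 0")
  case True
  then show ?thesis by auto
next
  case False
  then have F: "F \<noteq> 0" and G: "G \<noteq> 0" by auto
  have da: "a \<le> fls_subdegree F" using fls_subdegree_geI[OF F] assms(1) by blast
  have db: "b \<le> fls_subdegree G" using fls_subdegree_geI[OF G] assms(2) by blast
  have "(F * G) $$ n = (\<Sum>i\<in>{fls_subdegree F..n - fls_subdegree G}. F $$ i * G $$ (n - i))"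
    by (rule fls_times_nth(2))
  also have "\<dots> = (\<Sum>i\<in>{a..n - b}. F $$ i * G $$ (n - i))"
  proof (rule sum.mono_neutral_left)
    show "\<forall>i\<in>{a..n - b} - {fls_subdegree F..n - fls_subdegree G}. F $$ i * G $$ (n - i) = 0"
    proof
      fix i assume "i \<in> {a..n - b} - {fls_subdegree F..n - fls_subdegree G}"
      then have "i < fls_subdegree F \<or> n - i < fls_subdegree G" by auto
      then show "F $$ i * G $$ (n - i) = 0" by auto
    qed
  qed (use da db in auto)
  finally show ?thesis .
qed

lemma Tf_mult: assumes "bnd A NA" "bnd B NB" shows "Tf (lmult A B) = Tf A * Tf B"
proof (rule fls_eq_iff[THEN iffD2], intro allI)
  fix n
  have b: "bnd (lmult A B) (NA + NB)" by (rule bnd_lmult[OF assms])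
  have a1: "\<forall>i < - NA. Tf A $$ i = 0" using assms(1) by (auto simp: Tf_nth[OF assms(1)] bnd_def)
  have a2: "\<forall>i < - NB. Tf B $$ i = 0" using assms(2) by (auto simp: Tf_nth[OF assms(2)] bnd_def)
  have "(Tf A * Tf B) $$ n = (\<Sum>i\<in>{- NA..n - - NB}. Tf A $$ i * Tf B $$ (n - i))"
    by (rule fls_mult_nth_gen[OF a1 a2])
  also have "\<dots> = (\<Sum>i\<in>{- NA..n - - NB}. A (- i) * B (- (n - i)))"
    by (simp add: Tf_nth[OF assms(1)] Tf_nth[OF assms(2)])
  also have "\<dots> = (\<Sum>k\<in>{- n - NB..NA}. A k * B (- n - k))"
    by (rule sum.reindex_bij_witness[of _ uminus uminus]) auto
  also have "\<dots> = lmult A B (- n)" by (simp add: lmult_eq[OF assms])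
  finally show "Tf (lmult A B) $$ n = (Tf A * Tf B) $$ n" by (simp add: Tf_nth[OF b])
qed

lemma Tf_lone: "Tf lone = 1"
  by (rule fls_eq_iff[THEN iffD2]) (simp add: Tf_nth[OF bnd_lone] lone_def)

lemma bnd_add: fixes A B :: "int \<Rightarrow> dpoly" shows "bnd A NA \<Longrightarrow> bnd B NB \<Longrightarrow> bnd (\<lambda>n. A n + B n) (max NA NB)"
  by (auto simp: bnd_def)

lemma Tf_add: assumes "bnd A NA" "bnd B NB" shows "Tf (\<lambda>n. A n + B n) = Tf A + Tf B"
  by (rule fls_eq_iff[THEN iffD2]) (simp add: Tf_nth[OF assms(1)] Tf_nth[OF assms(2)] Tf_nth[OF bnd_add[OF assms]])

lemma bnd_smul: "bnd A NA \<Longrightarrow> bnd (smul c A) NA"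
  by (simp add: bnd_def smul_def)

lemma Tf_smul: assumes "bnd A NA" shows "Tf (smul c A) = fls_const (rconst c) * Tf A"
  by (rule fls_eq_iff[THEN iffD2]) (simp add: Tf_nth[OF assms] Tf_nth[OF bnd_smul[OF assms]] smul_def)

lemma Tf_zero: "Tf (\<lambda>n. 0) = 0"
proof -
  have "bnd (\<lambda>n. 0 :: dpoly) 0" by (simp add: bnd_def)
  then show ?thesis by (intro fls_eq_iff[THEN iffD2]) (simp add: Tf_nth)
qed

definition der :: "(dpoly fls \<Rightarrow> dpoly fls) \<Rightarrow> bool" where
  "der D \<longleftrightarrow> (\<forall>F G. D (F * G) = D F * G + F * D G)"

lemma der_one: assumes "der D" shows "D 1 = 0"
proof -
  have "D (1 * 1) = D 1 * 1 + 1 * D 1" using assms by (simp only: der_def)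
  then have "D 1 = D 1 + D 1" by simp
  then show ?thesis by (metis add_cancel_right_right)
qed

definition dZ :: "dpoly fls \<Rightarrow> dpoly fls" where
  "dZ F = - fls_shift (-2) (fls_deriv F)"

lemma der_dZ: "der dZ"
  unfolding der_def dZ_def
  by (simp add: fls_shifted_times_simps algebra_simps)

lemma Tf_dz: assumes "bnd A N" shows "Tf (dz A) = dZ (Tf A)"
proof (rule fls_eq_iff[THEN iffD2], intro allI)
  fix n
  have "Tf (dz A) $$ n = dz A (- n)" by (rule Tf_nth[OF bnd_dz[OF assms]])
  also have "\<dots> = of_int (1 - n) * A (1 - n)" by (simp add: dz_def)
  also have "\<dots> = dZ (Tf A) $$ n"
    by (simp add: dZ_def Tf_nth[OF assms] algebra_simps)
  finally show "Tf (dz A) $$ n = dZ (Tf A) $$ n" .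
qed

definition dX :: "dpoly fls \<Rightarrow> dpoly fls" where
  "dX F = Abs_fls (\<lambda>n. dx (F $$ n))"

lemma dX_nth: "dX F $$ n = dx (F $$ n)"
proof -
  have "\<forall>\<^sub>\<infinity>m. (\<lambda>n. dx (F $$ n)) (- int m) = 0"
    unfolding MOST_nat
  proof (intro exI[of _ "nat (- fls_subdegree F)"] allI impI)
    fix m assume "m > nat (- fls_subdegree F)"
    then have "- int m < fls_subdegree F" by linarith
    then show "(\<lambda>n. dx (F $$ n)) (- int m) = 0" by simp
  qed
  then show ?thesis unfolding dX_def by simp
qed

lemma Tf_dxs: assumes "bnd A N" shows "Tf (dxs A) = dX (Tf A)"
  by (rule fls_eq_iff[THEN iffD2])
     (simp add: dX_nth Tf_nth[OF assms] Tf_nth[OF bnd_dxs[OF assms]] dxs_def)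

lemma der_dX: "der dX"
  unfolding der_def
proof (intro allI fls_eq_iff[THEN iffD2])
  fix F G :: "dpoly fls" and n
  define a where "a = fls_subdegree F"
  define b where "b = fls_subdegree G"
  have F0: "\<forall>i<a. F $$ i = 0" and G0: "\<forall>i<b. G $$ i = 0" by (auto simp: a_def b_def)
  have F1: "\<forall>i<a. dX F $$ i = 0" and G1: "\<forall>i<b. dX G $$ i = 0" by (auto simp: a_def b_def dX_nth)
  have "dX (F * G) $$ n = dx (\<Sum>i\<in>{a..n - b}. F $$ i * G $$ (n - i))"
    by (simp add: dX_nth fls_mult_nth_gen[OF F0 G0])
  also have "\<dots> = (\<Sum>i\<in>{a..n - b}. dX F $$ i * G $$ (n - i)) + (\<Sum>i\<in>{a..n - b}. F $$ i * dX G $$ (n - i))"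
    by (simp add: dx_sum dx_mult dX_nth sum.distrib)
  also have "\<dots> = (dX F * G + F * dX G) $$ n"
    by (simp add: fls_mult_nth_gen[OF F1 G0] fls_mult_nth_gen[OF F0 G1])
  finally show "dX (F * G) $$ n = (dX F * G + F * dX G) $$ n" .
qed

definition K :: "rat \<Rightarrow> dpoly fls" where
  "K c = fls_const (rconst c)"

lemma fls_const_add': "fls_const (a + b) = fls_const a + fls_const (b :: dpoly)"
  by (rule fls_eq_iff[THEN iffD2]) simp

lemma K_add: "K (a + b) = K a + K b" by (simp add: K_def rconst_add fls_const_add')
lemma K_mult: "K (a * b) = K a * K b" by (simp add: K_def rconst_mult)
lemma K_one[simp]: "K 1 = 1" by (simp add: K_def)
lemma K_zero[simp]: "K 0 = 0" by (simp add: K_def)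
lemma K_uminus: "K (- a) = - K a"
proof -
  have "K (- a) + K a = 0" by (simp add: K_add[symmetric])
  then show ?thesis by (simp add: eq_neg_iff_add_eq_0)
qed
lemma K_diff: "K (a - b) = K a - K b"
  using K_add[of a "-b"] K_uminus[of b] by simp
lemma K_of_int: "K (of_int i) = of_int i"
  by (simp add: K_def fls_of_int of_int_dpoly)
lemma K_of_nat: "K (of_nat i) = of_nat i"
  using K_of_int[of "int i"] by simp


definition Uf :: "nat \<Rightarrow> dpoly fps" where
  "Uf r = Abs_fps (\<lambda>j. if j = 0 then 0 else L0 r (int r - int j))"

definition Cq :: "rat \<Rightarrow> dpoly fps" where
  "Cq q = Abs_fps (\<lambda>k. rconst (q gchoose k))"

definition Pw :: "nat \<Rightarrow> int \<Rightarrow> dpoly fls" where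
  "Pw r e = fls_shift e (fps_to_fls (Cq (of_int e / of_nat r) oo Uf r))"

lemma Uf0: "Uf r $ 0 = 0" by (simp add: Uf_def)

lemma rconst_sum: "rconst (sum f A) = (\<Sum>x\<in>A. rconst (f x))"
  by (induction A rule: infinite_finite_induct) (auto simp: rconst_add)

lemma Cq_mult: "Cq p * Cq q = Cq (p + q)"
proof (rule fps_ext)
  fix n
  have "(Cq p * Cq q) $ n = (\<Sum>i=0..n. rconst (p gchoose i) * rconst (q gchoose (n - i)))"
    by (simp add: fps_mult_nth Cq_def)
  also have "\<dots> = rconst (\<Sum>i=0..n. (p gchoose i) * (q gchoose (n - i)))"
    by (simp add: rconst_sum rconst_mult)
  also have "\<dots> = rconst ((p + q) gchoose n)" by (simp add: gbinomial_Vandermonde)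
  finally show "(Cq p * Cq q) $ n = Cq (p + q) $ n" by (simp add: Cq_def)
qed

lemma Cq0: "Cq 0 = 1"
  by (rule fps_ext) (simp add: Cq_def gbinomial_0_left)

lemma one_gchoose: "(1::rat) gchoose k = (if k = 0 \<or> k = 1 then 1 else 0)"
proof -
  have "(1::rat) gchoose k = of_nat (1 choose k)" by (metis binomial_gbinomial of_nat_1)
  then show ?thesis by (cases k) (auto simp: binomial_eq_0)
qed

lemma Cq1: "Cq 1 = 1 + fps_X"
  by (rule fps_ext) (simp add: Cq_def one_gchoose)

lemma Cq_comp_mult: "(Cq p oo Uf r) * (Cq q oo Uf r) = Cq (p + q) oo Uf r"
  by (simp add: fps_compose_mult_distrib[OF Uf0, symmetric] Cq_mult)

lemma Pw_mult: assumes "r > 0" shows "Pw r e1 * Pw r e2 = Pw r (e1 + e2)"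
proof -
  have "Pw r e1 * Pw r e2 = fls_shift (e1 + e2)
     (fps_to_fls (Cq (of_int e1 / of_nat r) oo Uf r) * fps_to_fls (Cq (of_int e2 / of_nat r) oo Uf r))"
    by (simp add: Pw_def fls_times_both_shifted_simp)
  also have "\<dots> = fls_shift (e1 + e2) (fps_to_fls (Cq (of_int e1 / of_nat r + of_int e2 / of_nat r) oo Uf r))"
    by (simp add: fls_times_fps_to_fls[symmetric] Cq_comp_mult)
  also have "of_int e1 / of_nat r + of_int e2 / of_nat r = (of_int (e1 + e2) / of_nat r :: rat)"
    by (simp add: add_divide_distrib)
  finally show ?thesis by (simp add: Pw_def)
qed

lemma Pw0: "Pw r 0 = 1"
  by (simp add: Pw_def Cq0)

lemma Pw_nat: assumes "r > 0" shows "Pw r (int k) = Pw r 1 ^ k"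
proof (induction k)
  case 0 then show ?case by (simp add: Pw0)
next
  case (Suc k)
  have "Pw r (int (Suc k)) = Pw r (int k) * Pw r 1" by (simp add: Pw_mult[OF assms] add.commute)
  then show ?case using Suc by (simp add: power_Suc2)
qed

lemma Pw_inv: assumes "r > 0" shows "Pw r e * Pw r (- e) = 1"
  by (simp add: Pw_mult[OF assms] Pw0)

lemma bnd_L0: "bnd (L0 r) (int r)" by (simp add: bnd_def L0_def)

lemma Pw_r: assumes "r > 0" shows "Pw r (int r) = Tf (L0 r)"
proof (rule fls_eq_iff[THEN iffD2], intro allI)
  fix j
  have q: "(of_int (int r) / of_nat r :: rat) = 1" using assms by simp
  have C: "Cq 1 oo Uf r = 1 + Uf r" by (simp add: Cq1 fps_compose_add_distrib Uf0)
  have "Pw r (int r) = fls_shift (int r) (fps_to_fls (1 + Uf r))"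
    unfolding Pw_def q C by (rule refl)
  then have "Pw r (int r) $$ j = fps_to_fls (1 + Uf r) $$ (j + int r)"
    by simp
  also have "\<dots> = L0 r (- j)"
  proof (cases "j + int r < 0")
    case True then show ?thesis by (simp add: L0_def)
  next
    case False
    show ?thesis
    proof (cases "j + int r = 0")
      case True then have "j = - int r" by simp
      then show ?thesis by (simp add: L0_def Uf_def)
    next
      case False2: False
      then have "nat (j + int r) \<noteq> 0" using False by simp
      moreover have "int r - int (nat (j + int r)) = - j" using False by simp
      ultimately show ?thesis using False by (simp add: Uf_def)
    qed
  qed
  also have "\<dots> = Tf (L0 r) $$ j" by (simp add: Tf_nth[OF bnd_L0])
  finally show "Pw r (int r) $$ j = Tf (L0 r) $$ j" .
qed

definition uu :: "nat \<Rightarrow> int \<Rightarrow> dpoly" where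
  "uu r = (\<lambda>m. L0 r (m + int r) - lone m)"

lemma bnd_uu: "bnd (uu r) 0"
  by (simp add: bnd_def uu_def L0_def lone_def)

lemma Tf_uu: "Tf (uu r) = fps_to_fls (Uf r)"
proof (rule fls_eq_iff[THEN iffD2], intro allI)
  fix j
  show "Tf (uu r) $$ j = fps_to_fls (Uf r) $$ j"
  proof (cases "j < 0")
    case True then show ?thesis unfolding Tf_nth[OF bnd_uu] by (simp add: uu_def L0_def lone_def)
  next
    case False
    show ?thesis
    proof (cases "j = 0")
      case True then show ?thesis unfolding Tf_nth[OF bnd_uu] by (simp add: uu_def L0_def lone_def Uf_def)
    next
      case False2: False
      then have "nat j \<noteq> 0" "int (nat j) = j" using False by auto
      then show ?thesis using False False2 unfolding Tf_nth[OF bnd_uu] by (simp add: uu_def lone_def Uf_def)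
    qed
  qed
qed

lemma lpow_uu: "bnd (lpow (uu r) k) 0 \<and> Tf (lpow (uu r) k) = fps_to_fls (Uf r ^ k)"
proof (induction k)
  case 0 then show ?case by (simp add: bnd_lone Tf_lone)
next
  case (Suc k)
  have b: "bnd (lpow (uu r) (Suc k)) 0" using bnd_lmult[OF conjunct1[OF Suc.IH] bnd_uu] by simp
  have "Tf (lpow (uu r) (Suc k)) = Tf (lpow (uu r) k) * Tf (uu r)"
    by (simp add: Tf_mult[OF conjunct1[OF Suc.IH] bnd_uu])
  also have "\<dots> = fps_to_fls (Uf r ^ Suc k)"
    using Suc.IH by (simp add: Tf_uu fls_times_fps_to_fls[symmetric] power_Suc2)
  finally show ?case using b by simp
qed

lemma lau_Pw: assumes "r > 0"
  shows "bnd (lau_rpow r (of_int e / of_nat r) (L0 r)) e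
       \<and> Tf (lau_rpow r (of_int e / of_nat r) (L0 r)) = Pw r e"
proof -
  let ?q = "(of_int e / of_nat r :: rat)"
  have fl: "\<lfloor>?q * of_nat r\<rfloor> = e" using assms by simp
  have L: "lau_rpow r ?q (L0 r) n =
     (if n - e > 0 then 0 else (\<Sum>k\<in>{0..nat (- (n - e))}. rconst (?q gchoose k) * lpow (uu r) k (n - e)))" for n
    unfolding lau_rpow_def Let_def fl uu_def by (rule refl)
  have b: "bnd (lau_rpow r ?q (L0 r)) e" by (simp add: bnd_def L)
  have lp: "lpow (uu r) k t = (Uf r ^ k) $ nat (- t)" if "t \<le> 0" for k t
  proof -
    have "lpow (uu r) k t = Tf (lpow (uu r) k) $$ (- t)" using Tf_nth[OF conjunct1[OF lpow_uu]] by simp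
    also have "\<dots> = (Uf r ^ k) $ nat (- t)" using lpow_uu that by simp
    finally show ?thesis .
  qed
  have "Tf (lau_rpow r ?q (L0 r)) = Pw r e"
  proof (rule fls_eq_iff[THEN iffD2], intro allI)
    fix j
    show "Tf (lau_rpow r ?q (L0 r)) $$ j = Pw r e $$ j"
    proof (cases "j + e < 0")
      case True then show ?thesis by (simp add: Tf_nth[OF b] L Pw_def)
    next
      case False
      have "Tf (lau_rpow r ?q (L0 r)) $$ j = (\<Sum>k\<in>{0..nat (j + e)}. rconst (?q gchoose k) * (Uf r ^ k) $ nat (j + e))"
        using False by (simp add: Tf_nth[OF b] L lp) (simp only: add.commute)
      also have "\<dots> = Pw r e $$ j"
        using False by (simp add: Pw_def fps_compose_nth Cq_def)
      finally show ?thesis .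
    qed
  qed
  then show ?thesis using b by simp
qed


lemma ddf0_lone: "ddf 0 lone = lone"
  by (rule ext) (simp add: ddf_def lone_def DD_one)

lemma ddf1_lone: "ddf 1 lone = (\<lambda>n. 0)"
  by (rule ext) (simp add: ddf_def lone_def DD_one)

lemma ddf0_L0: "ddf 0 (L0 r) = L0 r"
  by (rule ext) (simp add: ddf_def L0_def DD_one DD_fvar0)

lemma ddf1_L0: "ddf 1 (L0 r) = (\<lambda>n. 0)"
  by (rule ext) (simp add: ddf_def L0_def DD_one DD_fvar0)

lemma S0_pow: assumes "qf Q"
  shows "Tf (ddf 0 (pdo_pow Q j)) = Tf (ddf 0 Q) ^ j"
proof (induction j)
  case 0 then show ?case by (simp add: ddf0_lone Tf_lone)
next
  case (Suc j)
  have b1: "bnd (pdo_pow Q j) (int j)" using pow_bnd[OF assms] by blast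
  have b2: "bnd Q 1" using qf_bnd[OF assms] .
  have "Tf (ddf 0 (pdo_pow Q (Suc j))) = Tf (lmult (ddf 0 (pdo_pow Q j)) (ddf 0 Q))"
    by (simp add: DD0_pdo_mult[OF b1 b2])
  also have "\<dots> = Tf (ddf 0 (pdo_pow Q j)) * Tf (ddf 0 Q)"
    by (rule Tf_mult[OF bnd_ddf[OF b1] bnd_ddf[OF b2]])
  finally show ?case using Suc by (simp add: power_Suc2)
qed

lemma lead_mult:
  fixes F G :: "dpoly fls"
  assumes "\<forall>i<a. F $$ i = 0" "F $$ a = 1" "\<forall>i<b. G $$ i = 0" "G $$ b = 1"
  shows "(\<forall>i<a+b. (F * G) $$ i = 0) \<and> (F * G) $$ (a + b) = 1"
proof -
  have "(F * G) $$ i = (\<Sum>k\<in>{a..i - b}. F $$ k * G $$ (i - k))" for i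
    by (rule fls_mult_nth_gen[OF assms(1) assms(3)])
  then show ?thesis using assms(2,4) by auto
qed

lemma lead_pow:
  fixes F :: "dpoly fls"
  assumes "\<forall>i< -1. F $$ i = 0" "F $$ (-1) = 1"
  shows "(\<forall>i < - int p. (F ^ p) $$ i = 0) \<and> (F ^ p) $$ (- int p) = 1"
proof (induction p)
  case 0 then show ?case by simp
next
  case (Suc p)
  from lead_mult[OF conjunct1[OF Suc.IH] conjunct2[OF Suc.IH] assms]
  show ?case by (simp add: power_Suc2 algebra_simps)
qed

lemma root_uniq_fls:
  fixes S P :: "dpoly fls"
  assumes "r > 0" "\<forall>i< -1. S $$ i = 0" "S $$ (-1) = 1" "\<forall>i< -1. P $$ i = 0" "P $$ (-1) = 1"
    and "S ^ r = P ^ r"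
  shows "S = P"
proof -
  obtain n where n: "r = Suc n" using assms(1) by (cases r) auto
  define W where "W = (\<Sum>p<Suc n. S ^ p * P ^ (n - p))"
  have "S ^ Suc n - P ^ Suc n = (S - P) * W" unfolding W_def by (rule diff_power_eq_sum)
  then have z: "(S - P) * W = 0" using assms(6) n by simp
  have t: "(S ^ p * P ^ (n - p)) $$ (- int n) = 1" if "p < Suc n" for p
  proof -
    from lead_mult[OF conjunct1[OF lead_pow[OF assms(2,3), of p]] conjunct2[OF lead_pow[OF assms(2,3), of p]]
                      conjunct1[OF lead_pow[OF assms(4,5), of "n - p"]] conjunct2[OF lead_pow[OF assms(4,5), of "n - p"]]]
    have "(S ^ p * P ^ (n - p)) $$ (- int p + - int (n - p)) = 1" by blast
    moreover have "- int p + - int (n - p) = - int n" using that by simp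
    ultimately show ?thesis by simp
  qed
  have "W $$ (- int n) = of_nat (Suc n)"
    unfolding W_def fls_nth_sum using t by simp
  moreover have "(of_nat (Suc n) :: dpoly) \<noteq> 0" by (rule of_nat_neq_0)
  ultimately have "W \<noteq> 0" by (intro fls_nonzeroI[of _ "- int n"]) simp
  with z have "S - P = 0" by simp
  then show ?thesis by simp
qed

lemma Pw_shape: "(\<forall>i < -1. Pw r 1 $$ i = 0) \<and> Pw r 1 $$ (-1) = 1"
  by (simp add: Pw_def fps_compose_nth Cq_def)

lemma S0_shape: assumes "qf Q"
  shows "(\<forall>i < -1. Tf (ddf 0 Q) $$ i = 0) \<and> Tf (ddf 0 Q) $$ (-1) = 1"
  unfolding Tf_nth[OF bnd_ddf[OF qf_bnd[OF assms]]] using assms by (simp add: ddf_def qf_def DD_one)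

lemma S0_eq: assumes "r > 0" "qf Q" "pdo_pow Q r = L0 r"
  shows "Tf (ddf 0 Q) = Pw r 1"
proof (rule root_uniq_fls[OF assms(1)])
  show "\<forall>i < -1. Tf (ddf 0 Q) $$ i = 0" "Tf (ddf 0 Q) $$ (-1) = 1" using S0_shape[OF assms(2)] by auto
  show "\<forall>i < -1. Pw r 1 $$ i = 0" "Pw r 1 $$ (-1) = 1" using Pw_shape by auto
  have "Tf (ddf 0 Q) ^ r = Tf (ddf 0 (pdo_pow Q r))" by (simp add: S0_pow[OF assms(2)])
  also have "\<dots> = Pw r (int r)" by (simp add: assms(3) ddf0_L0 Pw_r[OF assms(1)])
  also have "\<dots> = Pw r 1 ^ r" by (rule Pw_nat[OF assms(1)])
  finally show "Tf (ddf 0 Q) ^ r = Pw r 1 ^ r" .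
qed

lemma der_Pw_nat: assumes "der D" "r > 0"
  shows "D (Pw r (int k)) = K (of_int (int k)) * Pw r (int k - 1) * D (Pw r 1)"
proof (induction k)
  case 0 then show ?case using der_one[OF assms(1)] by (simp add: Pw0)
next
  case (Suc k)
  have "D (Pw r (int (Suc k))) = D (Pw r (int k) * Pw r 1)"
    by (simp add: Pw_mult[OF assms(2)] add.commute)
  also have "\<dots> = D (Pw r (int k)) * Pw r 1 + Pw r (int k) * D (Pw r 1)"
    using assms(1) by (simp add: der_def)
  also have "\<dots> = K (of_nat k) * (Pw r (int k - 1) * Pw r 1) * D (Pw r 1) + Pw r (int k) * D (Pw r 1)"
    using Suc by (simp add: algebra_simps)
  also have "Pw r (int k - 1) * Pw r 1 = Pw r (int k)" by (simp add: Pw_mult[OF assms(2)])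
  also have "K (of_nat k) * Pw r (int k) * D (Pw r 1) + Pw r (int k) * D (Pw r 1)
      = K (of_nat (Suc k)) * Pw r (int k) * D (Pw r 1)"
    by (simp add: K_add algebra_simps)
  finally show ?case by simp
qed

lemma der_Pw: assumes "der D" "r > 0"
  shows "D (Pw r e) = K (of_int e) * Pw r (e - 1) * D (Pw r 1)"
proof (cases "e \<ge> 0")
  case True
  then obtain k where "e = int k" by (intro that[of "nat e"]) auto
  then show ?thesis using der_Pw_nat[OF assms] by simp
next
  case False
  then obtain k where k: "e = - int k" by (intro that[of "nat (- e)"]) auto
  let ?D1 = "D (Pw r 1)"
  have inv: "Pw r e * Pw r (int k) = 1" using Pw_inv[OF assms(2), of e] k by simp
  have "D (Pw r e * Pw r (int k)) = 0" using inv der_one[OF assms(1)] by simp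
  then have h: "D (Pw r e) * Pw r (int k) = - (Pw r e * D (Pw r (int k)))"
    using assms(1) by (simp add: der_def eq_neg_iff_add_eq_0)
  have "D (Pw r e) = D (Pw r e) * (Pw r e * Pw r (int k))" using inv by simp
  also have "\<dots> = (D (Pw r e) * Pw r (int k)) * Pw r e" by (simp add: algebra_simps)
  also have "\<dots> = - (Pw r e * D (Pw r (int k))) * Pw r e" by (simp only: h)
  also have "\<dots> = - (K (of_int (int k)) * (Pw r e * Pw r (int k - 1) * Pw r e) * ?D1)"
    by (simp add: der_Pw_nat[OF assms] algebra_simps)
  also have "Pw r e * Pw r (int k - 1) * Pw r e = Pw r (e - 1)"
  proof -
    have "e + (int k - 1) + e = e - 1" using k by simp
    then show ?thesis by (simp only: Pw_mult[OF assms(2)])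
  qed
  also have "- (K (of_int (int k)) * Pw r (e - 1) * ?D1) = K (of_int e) * Pw r (e - 1) * ?D1"
    by (simp add: k K_uminus)
  finally show ?thesis .
qed


lemma rec_step:
  assumes r: "r > 0" and q: "qf Q" and S: "Tf (ddf 0 Q) = Pw r 1"
  shows "Tf (ddf 1 (pdo_pow Q (Suc j))) = Pw r (int j) * Tf (ddf 1 Q)
           + Tf (ddf 1 (pdo_pow Q j)) * Pw r 1 + dZ (Pw r (int j)) * dX (Pw r 1)"
proof -
  define A where "A = pdo_pow Q j"
  have bA: "bnd A (int j)" using pow_bnd[OF q] by (simp add: A_def)
  have bQ: "bnd Q 1" by (rule qf_bnd[OF q])
  define l1 where "l1 = lmult (ddf 0 A) (ddf 1 Q)"
  define l2 where "l2 = lmult (ddf 1 A) (ddf 0 Q)"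
  define l3 where "l3 = lmult (dz (ddf 0 A)) (dxs (ddf 0 Q))"
  have b1: "bnd l1 (int j + 1)" unfolding l1_def by (rule bnd_lmult[OF bnd_ddf[OF bA] bnd_ddf[OF bQ]])
  have b2: "bnd l2 (int j + 1)" unfolding l2_def by (rule bnd_lmult[OF bnd_ddf[OF bA] bnd_ddf[OF bQ]])
  have b3: "bnd l3 (int j - 1 + 1)" unfolding l3_def by (rule bnd_lmult[OF bnd_dz[OF bnd_ddf[OF bA]] bnd_dxs[OF bnd_ddf[OF bQ]]])
  have e: "ddf 1 (pdo_pow Q (Suc j)) = (\<lambda>n. (\<lambda>n. l1 n + l2 n) n + l3 n)"
    using DD1_pdo_mult[OF bA bQ] by (simp add: A_def l1_def l2_def l3_def)
  have "Tf (ddf 1 (pdo_pow Q (Suc j))) = Tf (\<lambda>n. l1 n + l2 n) + Tf l3"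
    unfolding e by (rule Tf_add[OF bnd_add[OF b1 b2] b3])
  also have "Tf (\<lambda>n. l1 n + l2 n) = Tf l1 + Tf l2" by (rule Tf_add[OF b1 b2])
  also have "Tf l1 = Tf (ddf 0 A) * Tf (ddf 1 Q)"
    unfolding l1_def by (rule Tf_mult[OF bnd_ddf[OF bA] bnd_ddf[OF bQ]])
  also have "Tf l2 = Tf (ddf 1 A) * Tf (ddf 0 Q)"
    unfolding l2_def by (rule Tf_mult[OF bnd_ddf[OF bA] bnd_ddf[OF bQ]])
  also have "Tf l3 = Tf (dz (ddf 0 A)) * Tf (dxs (ddf 0 Q))"
    unfolding l3_def by (rule Tf_mult[OF bnd_dz[OF bnd_ddf[OF bA]] bnd_dxs[OF bnd_ddf[OF bQ]]])
  also have "Tf (dz (ddf 0 A)) = dZ (Tf (ddf 0 A))" by (rule Tf_dz[OF bnd_ddf[OF bA]])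
  also have "Tf (dxs (ddf 0 Q)) = dX (Tf (ddf 0 Q))" by (rule Tf_dxs[OF bnd_ddf[OF bQ]])
  also have "Tf (ddf 0 A) = Pw r (int j)"
    unfolding A_def S0_pow[OF q] S Pw_nat[OF r] by (rule refl)
  finally show ?thesis by (simp add: S A_def)
qed

lemma closed_form:
  assumes r: "r > 0" and q: "qf Q" and S: "Tf (ddf 0 Q) = Pw r 1"
  defines "W \<equiv> dZ (Pw r 1) * dX (Pw r 1)"
  shows "Tf (ddf 1 (pdo_pow Q j)) = K (of_nat j) * Pw r (int j - 1) * Tf (ddf 1 Q)
            + K (of_nat j * (of_nat j - 1) / 2) * Pw r (int j - 2) * W"
proof (induction j)
  case 0 then show ?case unfolding pdo_pow.simps ddf1_lone Tf_zero by simp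
next
  case (Suc j)
  let ?X = "Tf (ddf 1 Q)" and ?P = "Pw r"
  define c where "c = (of_nat j * (of_nat j - 1) / 2 :: rat)"
  have P1: "?P (int j - 1) * ?P 1 = ?P (int j)" by (simp add: Pw_mult[OF r])
  have P2: "?P (int j - 2) * ?P 1 = ?P (int j - 1)" by (simp add: Pw_mult[OF r])
  have dZ: "dZ (?P (int j)) = K (of_nat j) * ?P (int j - 1) * dZ (?P 1)"
    using der_Pw[OF der_dZ r, of "int j"] by simp
  have "Tf (ddf 1 (pdo_pow Q (Suc j))) = ?P (int j) * ?X
      + (K (of_nat j) * ?P (int j - 1) * ?X + K c * ?P (int j - 2) * W) * ?P 1
      + K (of_nat j) * ?P (int j - 1) * dZ (?P 1) * dX (?P 1)"
    using rec_step[OF r q S, of j] Suc by (simp add: c_def dZ)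
  also have "\<dots> = ?P (int j) * ?X + K (of_nat j) * (?P (int j - 1) * ?P 1) * ?X
      + K c * (?P (int j - 2) * ?P 1) * W + K (of_nat j) * ?P (int j - 1) * W"
    by (simp add: W_def algebra_simps)
  also have "\<dots> = (1 + K (of_nat j)) * ?P (int j) * ?X + (K c + K (of_nat j)) * ?P (int j - 1) * W"
    unfolding P1 P2 by (simp add: algebra_simps)
  also have "1 + K (of_nat j) = K (of_nat (Suc j))" by (simp add: K_add)
  also have "K c + K (of_nat j) = K (of_nat (Suc j) * (of_nat (Suc j) - 1) / 2)"
  proof -
    have h: "c + of_nat j = (of_nat (Suc j) * (of_nat (Suc j) - 1) / 2 :: rat)"
      by (simp add: c_def field_simps)
    show ?thesis by (simp only: K_add[symmetric] h)
  qed
  finally show ?case by simp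
qed


lemma K2: "x * y = w \<Longrightarrow> K x * K y = K w" by (metis K_mult)
lemma K3: "x * y * z = w \<Longrightarrow> K x * K y * K z = K w" by (metis K_mult)

theorem mainTheorem5:
  fixes r a :: nat
  assumes "r \<ge> 2" and "a \<ge> 1"
  shows "(\<lambda>n. deg1 (pdo_pow (pdo_root r (L0 r)) a n))
           = smul (of_nat a * (of_nat a - of_nat r) / (2 * of_nat r ^ 2))
               (lmult (lmult (lau_rpow r (of_nat a / of_nat r - 2) (L0 r)) (dz (L0 r)))
                      (dxs (L0 r)))
       \<and> smul (of_nat a * (of_nat a - of_nat r) / (2 * of_nat r ^ 2))
               (lmult (lmult (lau_rpow r (of_nat a / of_nat r - 2) (L0 r)) (dz (L0 r)))
                      (dxs (L0 r)))
           = smul (of_nat a / (2 * of_nat r))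
               (lmult (dz (lau_rpow r (of_nat a / of_nat r - 1) (L0 r))) (dxs (L0 r)))"
proof -
  have r: "r > 0" using assms by simp
  have rq: "(of_nat r :: rat) \<noteq> 0" using r by simp
  define Q where "Q = pdo_root r (L0 r)"
  have q: "qf Q" and root: "pdo_pow Q r = L0 r" using root_props[OF r] by (auto simp: Q_def)
  have S: "Tf (ddf 0 Q) = Pw r 1" by (rule S0_eq[OF r q root])
  define W where "W = dZ (Pw r 1) * dX (Pw r 1)"
  define X where "X = Tf (ddf 1 Q)"
  have CF: "Tf (ddf 1 (pdo_pow Q j)) = K (of_nat j) * Pw r (int j - 1) * X
            + K (of_nat j * (of_nat j - 1) / 2) * Pw r (int j - 2) * W" for j
    using closed_form[OF r q S, of j] by (simp add: W_def X_def)
  have Yr: "Tf (ddf 1 (pdo_pow Q r)) = 0" unfolding root ddf1_L0 Tf_zero by (rule refl)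
  have Z: "K (of_nat r) * Pw r (int r - 1) * X + K (of_nat r * (of_nat r - 1) / 2) * Pw r (int r - 2) * W = 0"
    using CF[of r] Yr by simp
  have k1: "K (1 / of_nat r) * K (of_nat r) = 1" using K2[of "1 / of_nat r" "of_nat r" 1] rq by simp
  have p1: "Pw r (1 - int r) * Pw r (int r - 1) = 1" by (simp add: Pw_mult[OF r] Pw0)
  have p2: "Pw r (1 - int r) * Pw r (int r - 2) = Pw r (-1)" by (simp add: Pw_mult[OF r])
  have k2: "K (1 / of_nat r) * K (of_nat r * (of_nat r - 1) / 2) = K ((of_nat r - 1) / 2)"
    by (rule K2) (use rq in \<open>simp add: field_simps\<close>)
  have X1: "X = K ((1 - of_nat r) / 2) * Pw r (-1) * W"
  proof -
    have Z': "K (of_nat r) * Pw r (int r - 1) * X = - (K (of_nat r * (of_nat r - 1) / 2) * Pw r (int r - 2) * W)"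
      using Z by (simp add: eq_neg_iff_add_eq_0)
    have "X = (K (1 / of_nat r) * K (of_nat r)) * (Pw r (1 - int r) * Pw r (int r - 1)) * X"
      by (simp only: k1 p1 mult_1_left)
    also have "\<dots> = K (1 / of_nat r) * Pw r (1 - int r) * (K (of_nat r) * Pw r (int r - 1) * X)"
      by (simp add: algebra_simps)
    also have "\<dots> = - ((K (1 / of_nat r) * K (of_nat r * (of_nat r - 1) / 2)) * (Pw r (1 - int r) * Pw r (int r - 2)) * W)"
      unfolding Z' by (simp add: algebra_simps)
    also have "\<dots> = - (K ((of_nat r - 1) / 2) * Pw r (-1) * W)" by (simp only: k2 p2)
    also have "\<dots> = K ((1 - of_nat r) / 2) * Pw r (-1) * W"
    proof -
      have h: "(1 - of_nat r) / 2 = - ((of_nat r - 1) / 2 :: rat)" by (simp add: field_simps)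
      show ?thesis by (simp only: h K_uminus mult_minus_left)
    qed
    finally show ?thesis .
  qed
  have Ya: "Tf (ddf 1 (pdo_pow Q a)) = K (of_nat a * (of_nat a - of_nat r) / 2) * Pw r (int a - 2) * W"
  proof -
    have "Tf (ddf 1 (pdo_pow Q a)) = (K (of_nat a) * K ((1 - of_nat r) / 2)) * (Pw r (int a - 1) * Pw r (-1)) * W
        + K (of_nat a * (of_nat a - 1) / 2) * Pw r (int a - 2) * W"
      unfolding CF X1 by (simp add: algebra_simps)
    also have "Pw r (int a - 1) * Pw r (-1) = Pw r (int a - 2)" by (simp add: Pw_mult[OF r])
    also have "K (of_nat a) * K ((1 - of_nat r) / 2) = K (of_nat a * (1 - of_nat r) / 2)" by (rule K2) simp
    also have "K (of_nat a * (1 - of_nat r) / 2) * Pw r (int a - 2) * W + K (of_nat a * (of_nat a - 1) / 2) * Pw r (int a - 2) * W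
        = (K (of_nat a * (1 - of_nat r) / 2) + K (of_nat a * (of_nat a - 1) / 2)) * Pw r (int a - 2) * W"
      by (simp add: algebra_simps)
    also have "K (of_nat a * (1 - of_nat r) / 2) + K (of_nat a * (of_nat a - 1) / 2) = K (of_nat a * (of_nat a - of_nat r) / 2)"
    proof -
      have h: "of_nat a * (1 - of_nat r) / 2 + of_nat a * (of_nat a - 1) / 2 = (of_nat a * (of_nat a - of_nat r) / 2 :: rat)"
        by (simp add: field_simps)
      show ?thesis by (simp only: K_add[symmetric] h)
    qed
    finally show ?thesis .
  qed
  define c1 :: rat where "c1 = of_nat a * (of_nat a - of_nat r) / (2 * of_nat r ^ 2)"
  define c2 :: rat where "c2 = of_nat a / (2 * of_nat r)"
  have qa: "(of_nat a / of_nat r - 2 :: rat) = of_int (int a - 2 * int r) / of_nat r"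
    using rq by (simp add: field_simps)
  have qa2: "(of_nat a / of_nat r - 1 :: rat) = of_int (int a - int r) / of_nat r"
    using rq by (simp add: field_simps)
  define L1 where "L1 = lau_rpow r (of_nat a / of_nat r - 2) (L0 r)"
  define L2 where "L2 = lau_rpow r (of_nat a / of_nat r - 1) (L0 r)"
  have bL1: "bnd L1 (int a - 2 * int r)" and TL1: "Tf L1 = Pw r (int a - 2 * int r)"
    using lau_Pw[OF r, of "int a - 2 * int r"] by (auto simp: L1_def qa)
  have bL2: "bnd L2 (int a - int r)" and TL2: "Tf L2 = Pw r (int a - int r)"
    using lau_Pw[OF r, of "int a - int r"] by (auto simp: L2_def qa2)
  have bz: "bnd (dz (L0 r)) (int r - 1)" by (rule bnd_dz[OF bnd_L0])
  have bx: "bnd (dxs (L0 r)) (int r)" by (rule bnd_dxs[OF bnd_L0])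
  have Tz: "Tf (dz (L0 r)) = K (of_nat r) * Pw r (int r - 1) * dZ (Pw r 1)"
    using Tf_dz[OF bnd_L0] Pw_r[OF r] der_Pw[OF der_dZ r, of "int r"] by simp
  have Tx: "Tf (dxs (L0 r)) = K (of_nat r) * Pw r (int r - 1) * dX (Pw r 1)"
    using Tf_dxs[OF bnd_L0] Pw_r[OF r] der_Pw[OF der_dX r, of "int r"] by simp
  define R1 where "R1 = smul c1 (lmult (lmult L1 (dz (L0 r))) (dxs (L0 r)))"
  define R2 where "R2 = smul c2 (lmult (dz L2) (dxs (L0 r)))"
  have bR1: "bnd R1 (int a - 2 * int r + (int r - 1) + int r)"
    unfolding R1_def by (intro bnd_smul bnd_lmult bL1 bz bx)
  have bR2: "bnd R2 (int a - int r - 1 + int r)"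
    unfolding R2_def by (intro bnd_smul bnd_lmult bnd_dz bL2 bx)
  have TR1: "Tf R1 = K (of_nat a * (of_nat a - of_nat r) / 2) * Pw r (int a - 2) * W"
  proof -
    have "Tf R1 = K c1 * (Tf L1 * Tf (dz (L0 r)) * Tf (dxs (L0 r)))"
      unfolding R1_def
      by (simp add: Tf_smul[OF bnd_lmult[OF bnd_lmult[OF bL1 bz] bx]] K_def
          Tf_mult[OF bnd_lmult[OF bL1 bz] bx] Tf_mult[OF bL1 bz])
    also have "\<dots> = (K c1 * K (of_nat r) * K (of_nat r)) * (Pw r (int a - 2 * int r) * Pw r (int r - 1) * Pw r (int r - 1)) * W"
      unfolding TL1 Tz Tx W_def by (simp add: algebra_simps)
    also have "Pw r (int a - 2 * int r) * Pw r (int r - 1) * Pw r (int r - 1) = Pw r (int a - 2)"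
      by (simp add: Pw_mult[OF r])
    also have "K c1 * K (of_nat r) * K (of_nat r) = K (of_nat a * (of_nat a - of_nat r) / 2)"
      by (rule K3) (use rq in \<open>simp add: c1_def field_simps power2_eq_square\<close>)
    finally show ?thesis .
  qed
  have TR2: "Tf R2 = K (of_nat a * (of_nat a - of_nat r) / 2) * Pw r (int a - 2) * W"
  proof -
    have "Tf R2 = K c2 * (dZ (Tf L2) * Tf (dxs (L0 r)))"
      unfolding R2_def
      by (simp add: Tf_smul[OF bnd_lmult[OF bnd_dz[OF bL2] bx]] K_def
          Tf_mult[OF bnd_dz[OF bL2] bx] Tf_dz[OF bL2])
    also have "dZ (Tf L2) = K (of_int (int a - int r)) * Pw r (int a - int r - 1) * dZ (Pw r 1)"
      unfolding TL2 by (rule der_Pw[OF der_dZ r])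
    also have "K c2 * (K (of_int (int a - int r)) * Pw r (int a - int r - 1) * dZ (Pw r 1) * Tf (dxs (L0 r)))
       = (K c2 * K (of_int (int a - int r)) * K (of_nat r)) * (Pw r (int a - int r - 1) * Pw r (int r - 1)) * W"
      unfolding Tx W_def by (simp add: algebra_simps)
    also have "Pw r (int a - int r - 1) * Pw r (int r - 1) = Pw r (int a - 2)"
      by (simp add: Pw_mult[OF r])
    also have "K c2 * K (of_int (int a - int r)) * K (of_nat r) = K (of_nat a * (of_nat a - of_nat r) / 2)"
      by (rule K3) (use rq in \<open>simp add: c2_def field_simps\<close>)
    finally show ?thesis .
  qed
  have bY: "bnd (ddf 1 (pdo_pow Q a)) (int a)" by (rule bnd_ddf) (use pow_bnd[OF q] in blast)
  have LHS: "(\<lambda>n. deg1 (pdo_pow (pdo_root r (L0 r)) a n)) = ddf 1 (pdo_pow Q a)"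
    by (simp add: Q_def ddf_def deg1_DD)
  have E1: "ddf 1 (pdo_pow Q a) = R1" by (rule Tf_inj[OF bY bR1]) (simp only: Ya TR1)
  have E2: "R1 = R2" by (rule Tf_inj[OF bR1 bR2]) (simp add: TR1 TR2)
  show ?thesis using E1 E2 unfolding LHS R1_def R2_def c1_def c2_def L1_def L2_def by simp
qed


end
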